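(* Let $\mu$ be a PU-monotone. If $A\in H_n$ and $B\in H_k$ are both neither positive semidefinite nor negative semidefinite and satisfy $\|A_+\|_\infty=\|B_+\|_\infty$ and $\|A_-\|_\infty=\|B_-\|_\infty$, then $\mu(A)=\mu(B)$. That is, restricted to such non-definite matrices, $\mu(A)$ is a function of $(\|A_+\|_\infty,\|A_-\|_\infty)$.
   Context: $H_n$ denotes the $n\times n$ complex Hermitian matrices. A linear map $\Phi:H_n\to H_k$ is PU if it maps positive semidefinite matrices to positive semidefinite matrices and $\Phi(\mathbb{1})=\mathbb{1}$. A function $\mu:\bigcup_{n\in\mathbb N}H_n\to\mathbb R$ is a PU-monotone if $\mu(\Phi(A))\leq\mu(A)$ for all $n,k$, all PU maps $\Phi:H_n\to H_k$ and all $A\in H_n$. Every $A$ decomposes uniquely as $A=A_+-A_-$ with $A_\pm$ positive semidefinite and $A_+A_-=0$. $\|\cdot\|_\infty$ is the operator norm. *)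

theory Defs
  imports "Jordan_Normal_Form.Matrix"
begin

definition herm_mat :: "nat \<Rightarrow> complex mat \<Rightarrow> bool" where
  "herm_mat n A \<longleftrightarrow> A \<in> carrier_mat n n \<and>
     (\<forall>i<n. \<forall>j<n. A $$ (i,j) = cnj (A $$ (j,i)))"

definition quad_form :: "complex mat \<Rightarrow> complex vec \<Rightarrow> complex" where
  "quad_form A v = (\<Sum>i<dim_vec v. \<Sum>j<dim_vec v. cnj (v $ i) * A $$ (i,j) * v $ j)"

definition psd_mat :: "nat \<Rightarrow> complex mat \<Rightarrow> bool" where
  "psd_mat n A \<longleftrightarrow> herm_mat n A \<and>
     (\<forall>v \<in> carrier_vec n. 0 \<le> Re (quad_form A v))"

definition vnorm :: "complex vec \<Rightarrow> real" where
  "vnorm v = sqrt (\<Sum>i<dim_vec v. (cmod (v $ i))\<^sup>2)"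

definition op_norm :: "complex mat \<Rightarrow> real" where
  "op_norm A = Sup {vnorm (A *\<^sub>v v) | v. v \<in> carrier_vec (dim_col A) \<and> vnorm v \<le> 1}"

text \<open>The unique decomposition A = A_+ - A_- with A_+, A_- psd and A_+ A_- = 0.\<close>
definition jordan_parts :: "complex mat \<Rightarrow> complex mat \<times> complex mat" where
  "jordan_parts A = (THE (P, N). psd_mat (dim_row A) P \<and> psd_mat (dim_row A) N \<and>
       A = P - N \<and> P * N = 0\<^sub>m (dim_row A) (dim_row A))"

definition pos_part :: "complex mat \<Rightarrow> complex mat" where
  "pos_part A = fst (jordan_parts A)"

definition neg_part :: "complex mat \<Rightarrow> complex mat" where
  "neg_part A = snd (jordan_parts A)"

text \<open>PU map H_n -> H_k: real-linear on H_n, maps H_n into H_k, positive, unital.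
  Values on non-Hermitian arguments are irrelevant.\<close>
definition pu_map :: "nat \<Rightarrow> nat \<Rightarrow> (complex mat \<Rightarrow> complex mat) \<Rightarrow> bool" where
  "pu_map n k \<Phi> \<longleftrightarrow>
     (\<forall>A. herm_mat n A \<longrightarrow> herm_mat k (\<Phi> A)) \<and>
     (\<forall>A B (a::real) (b::real). herm_mat n A \<and> herm_mat n B \<longrightarrow>
        \<Phi> (complex_of_real a \<cdot>\<^sub>m A + complex_of_real b \<cdot>\<^sub>m B) =
          complex_of_real a \<cdot>\<^sub>m \<Phi> A + complex_of_real b \<cdot>\<^sub>m \<Phi> B) \<and>
     (\<forall>A. psd_mat n A \<longrightarrow> psd_mat k (\<Phi> A)) \<and>
     \<Phi> (1\<^sub>m n) = 1\<^sub>m k"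

definition pu_monotone :: "(complex mat \<Rightarrow> real) \<Rightarrow> bool" where
  "pu_monotone \<mu> \<longleftrightarrow>
     (\<forall>n k \<Phi> A. 1 \<le> n \<and> 1 \<le> k \<and> pu_map n k \<Phi> \<and> herm_mat n A \<longrightarrow> \<mu> (\<Phi> A) \<le> \<mu> A)"

end

theory Submission
  imports Defs "HOL-Computational_Algebra.Polynomial" "Jordan_Normal_Form.Schur_Decomposition"
begin

definition ip :: "complex vec \<Rightarrow> complex vec \<Rightarrow> complex" where
  "ip v w = (\<Sum>i<dim_vec v. cnj (v $ i) * w $ i)"

lemma quad_form_ip:
  assumes "A \<in> carrier_mat n n" "v \<in> carrier_vec n"
  shows "quad_form A v = ip v (A *\<^sub>v v)"
proof -
  have "quad_form A v = (\<Sum>i<n. cnj (v $ i) * (\<Sum>j<n. A $$ (i,j) * v $ j))"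
    using assms unfolding quad_form_def by (simp add: sum_distrib_left mult.assoc)
  also have "\<dots> = ip v (A *\<^sub>v v)"
    using assms unfolding ip_def by (simp add: row_def scalar_prod_def lessThan_atLeast0)
  finally show ?thesis .
qed

lemma ip_add_right: "dim_vec x = dim_vec v \<Longrightarrow> dim_vec y = dim_vec v \<Longrightarrow> ip v (x + y) = ip v x + ip v y"
  unfolding ip_def by (simp add: distrib_left sum.distrib)
lemma ip_add_left: "dim_vec x = dim_vec w \<Longrightarrow> dim_vec y = dim_vec w \<Longrightarrow> ip (x + y) w = ip x w + ip y w"
  unfolding ip_def by (simp add: distrib_right sum.distrib)
lemma ip_minus_right: "dim_vec x = dim_vec v \<Longrightarrow> dim_vec y = dim_vec v \<Longrightarrow> ip v (x - y) = ip v x - ip v y"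
  unfolding ip_def by (simp add: right_diff_distrib sum_subtractf)
lemma ip_smult_right: "dim_vec x = dim_vec v \<Longrightarrow> ip v (c \<cdot>\<^sub>v x) = c * ip v x"
  unfolding ip_def by (simp add: sum_distrib_left algebra_simps)
lemma ip_smult_left: "ip (c \<cdot>\<^sub>v x) w = cnj c * ip x w"
  unfolding ip_def by (simp add: sum_distrib_left algebra_simps)
lemma ip_cnj: "dim_vec v = dim_vec w \<Longrightarrow> ip w v = cnj (ip v w)"
  unfolding ip_def by (simp add: mult.commute)
lemma ip_self: "ip v v = complex_of_real (\<Sum>i<dim_vec v. (cmod (v $ i))\<^sup>2)"
  unfolding ip_def of_real_sum by (intro sum.cong refl) (metis complex_norm_square mult.commute)
lemma ip_self_vnorm: "ip v v = complex_of_real ((vnorm v)\<^sup>2)"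
  unfolding ip_self vnorm_def by (simp add: sum_nonneg)
lemma ip_self_ge0: "0 \<le> Re (ip v v)"
  unfolding ip_self by (simp add: sum_nonneg)
lemma ip_self_zero: assumes "ip v v = 0" shows "v = 0\<^sub>v (dim_vec v)"
proof -
  have "(\<Sum>i<dim_vec v. (cmod (v $ i))\<^sup>2) = 0" by (metis assms ip_self of_real_eq_0_iff)
  then have "\<forall>i\<in>{..<dim_vec v}. (cmod (v $ i))\<^sup>2 = 0"
    by (subst sum_nonneg_eq_0_iff[symmetric]) auto
  show ?thesis
  proof (intro eq_vecI)
    fix i assume i: "i < dim_vec (0\<^sub>v (dim_vec v) :: complex vec)"
    then have "(cmod (v $ i))\<^sup>2 = 0" using \<open>\<forall>i\<in>{..<dim_vec v}. (cmod (v $ i))\<^sup>2 = 0\<close> by simp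
    then show "v $ i = 0\<^sub>v (dim_vec v) $ i" using i by simp
  qed simp
qed

lemma herm_carrier: "herm_mat n H \<Longrightarrow> H \<in> carrier_mat n n" unfolding herm_mat_def by blast

lemma mult_mat_vec_sum:
  assumes "H \<in> carrier_mat n n" "v \<in> carrier_vec n" "i < n"
  shows "(H *\<^sub>v v) $ i = (\<Sum>j<n. H $$ (i,j) * v $ j)"
  using assms by (simp add: scalar_prod_def lessThan_atLeast0)

lemma herm_ip:
  assumes H: "herm_mat n H" and v: "v \<in> carrier_vec n" and w: "w \<in> carrier_vec n"
  shows "ip (H *\<^sub>v v) w = ip v (H *\<^sub>v w)"
proof -
  have Hc: "H \<in> carrier_mat n n" and he0: "\<forall>i<n. \<forall>j<n. H $$ (i,j) = cnj (H $$ (j,i))"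
    using H unfolding herm_mat_def by blast+
  have he: "\<And>i j. i<n \<Longrightarrow> j<n \<Longrightarrow> H $$ (i,j) = cnj (H $$ (j,i))" using he0 by blast
  have "ip (H *\<^sub>v v) w = (\<Sum>i<n. cnj (\<Sum>j<n. H $$ (i,j) * v $ j) * w $ i)"
    unfolding ip_def using Hc by (intro sum.cong) (auto simp del: index_mult_mat_vec simp: mult_mat_vec_sum[OF Hc v])
  also have "\<dots> = (\<Sum>i<n. \<Sum>j<n. cnj (v $ j) * (H $$ (j,i) * w $ i))"
  proof (rule sum.cong[OF refl])
    fix i assume i: "i \<in> {..<n}"
    have "cnj (\<Sum>j<n. H $$ (i,j) * v $ j) * w $ i = (\<Sum>j<n. cnj (H $$ (i,j)) * cnj (v $ j) * w $ i)"
      by (simp add: cnj_sum sum_distrib_right)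
    also have "\<dots> = (\<Sum>j<n. cnj (v $ j) * (H $$ (j,i) * w $ i))"
    proof (rule sum.cong[OF refl])
      fix j assume j: "j \<in> {..<n}"
      have "H $$ (j,i) = cnj (H $$ (i,j))" using he[of j i] i j by simp
      then show "cnj (H $$ (i,j)) * cnj (v $ j) * w $ i = cnj (v $ j) * (H $$ (j,i) * w $ i)" by simp
    qed
    finally show "cnj (\<Sum>j<n. H $$ (i,j) * v $ j) * w $ i = (\<Sum>j<n. cnj (v $ j) * (H $$ (j,i) * w $ i))" .
  qed
  also have "\<dots> = (\<Sum>j<n. \<Sum>i<n. cnj (v $ j) * (H $$ (j,i) * w $ i))" by (rule sum.swap)
  also have "\<dots> = ip v (H *\<^sub>v w)"
    unfolding ip_def using v by (intro sum.cong) (auto simp del: index_mult_mat_vec simp: mult_mat_vec_sum[OF Hc w] sum_distrib_left)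
  finally show ?thesis .
qed


definition evalM :: "complex mat \<Rightarrow> complex poly \<Rightarrow> complex mat" where
  "evalM M p = fold_coeffs (\<lambda>a B. a \<cdot>\<^sub>m 1\<^sub>m (dim_row M) + M * B) p (0\<^sub>m (dim_row M) (dim_row M))"

lemma evalM_0[simp]: "evalM M 0 = 0\<^sub>m (dim_row M) (dim_row M)"
  unfolding evalM_def by simp

lemma evalM_pCons: assumes M: "M \<in> carrier_mat n n"
  shows "evalM M (pCons a p) = a \<cdot>\<^sub>m 1\<^sub>m n + M * evalM M p"
proof (cases "a = 0 \<and> p = 0")
  case True
  have "a \<cdot>\<^sub>m 1\<^sub>m n + M * 0\<^sub>m n n = 0\<^sub>m n n"
    using M True by (intro eq_matI) auto
  then show ?thesis using True M by simp
next
  case False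
  then show ?thesis using M unfolding evalM_def by (cases "a = 0") auto
qed

lemma evalM_carrier[simp]: assumes M: "M \<in> carrier_mat n n"
  shows "evalM M p \<in> carrier_mat n n"
proof (induction p)
  case (pCons a p)
  then show ?case using M by (simp add: evalM_pCons[OF M])
qed (use M in simp)

lemma evalM_dims[simp]: assumes "M \<in> carrier_mat n n"
  shows "dim_row (evalM M p) = n" "dim_col (evalM M p) = n"
  using evalM_carrier[OF assms] by auto

lemma smult_mat_mult_vec: assumes "A \<in> carrier_mat n m" "u \<in> carrier_vec m"
  shows "(k \<cdot>\<^sub>m A) *\<^sub>v u = k \<cdot>\<^sub>v (A *\<^sub>v u)"
  using assms by (intro eq_vecI) (auto simp: scalar_prod_def sum_distrib_left mult.assoc)

lemma evalM_pCons0: assumes M: "M \<in> carrier_mat n n"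
  shows "evalM M (pCons 0 p) = M * evalM M p"
proof -
  have c: "evalM M p \<in> carrier_mat n n" using M by simp
  have "0 \<cdot>\<^sub>m 1\<^sub>m n + M * evalM M p = M * evalM M p"
    using M c by (intro eq_matI) auto
  then show ?thesis by (simp add: evalM_pCons[OF M])
qed

lemma evalM_add: assumes M: "M \<in> carrier_mat n n"
  shows "evalM M (p + q) = evalM M p + evalM M q"
proof (induction p q rule: poly_induct2)
  case 0
  then show ?case using M by simp
next
  case (pCons a p b q)
  have c: "evalM M p \<in> carrier_mat n n" "evalM M q \<in> carrier_mat n n" using M by auto
  have "evalM M (pCons a p + pCons b q) = (a+b) \<cdot>\<^sub>m 1\<^sub>m n + M * (evalM M p + evalM M q)"
    using pCons by (simp add: evalM_pCons[OF M])
  also have "\<dots> = (a \<cdot>\<^sub>m 1\<^sub>m n + M * evalM M p) + (b \<cdot>\<^sub>m 1\<^sub>m n + M * evalM M q)"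
    using M c by (simp add: mult_add_distrib_mat[OF M c] ) (intro eq_matI, auto simp: algebra_simps)
  finally show ?case by (simp add: evalM_pCons[OF M])
qed

lemma evalM_smult: assumes M: "M \<in> carrier_mat n n"
  shows "evalM M (smult c p) = c \<cdot>\<^sub>m evalM M p"
proof (induction p)
  case 0
  then show ?case using M by (intro eq_matI) auto
next
  case (pCons a p)
  have c: "evalM M p \<in> carrier_mat n n" using M by auto
  then have cc: "dim_row (evalM M p) = n" "dim_col (evalM M p) = n" by auto
  have "evalM M (smult c (pCons a p)) = (c*a) \<cdot>\<^sub>m 1\<^sub>m n + M * (c \<cdot>\<^sub>m evalM M p)"
    using pCons by (simp add: evalM_pCons[OF M])
  also have "\<dots> = c \<cdot>\<^sub>m (a \<cdot>\<^sub>m 1\<^sub>m n + M * evalM M p)"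
    using M c by (simp add: mult_smult_distrib[OF M c]) (intro eq_matI, auto simp: algebra_simps cc)
  finally show ?case by (simp add: evalM_pCons[OF M])
qed

lemma evalM_mult: assumes M: "M \<in> carrier_mat n n"
  shows "evalM M (p * q) = evalM M p * evalM M q"
proof (induction p)
  case 0
  have "evalM M q \<in> carrier_mat n n" using M by auto
  then show ?case using M left_mult_zero_mat[OF \<open>evalM M q \<in> carrier_mat n n\<close>, of n] by simp
next
  case (pCons a p)
  have c: "evalM M p \<in> carrier_mat n n" "evalM M q \<in> carrier_mat n n" using M by auto
  have "evalM M (pCons a p * q) = a \<cdot>\<^sub>m evalM M q + M * (evalM M p * evalM M q)"
    using pCons by (simp add: evalM_add[OF M] evalM_smult[OF M] evalM_pCons0[OF M])
  also have "\<dots> = (a \<cdot>\<^sub>m 1\<^sub>m n) * evalM M q + (M * evalM M p) * evalM M q"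
  proof -
    have "(a \<cdot>\<^sub>m 1\<^sub>m n) * evalM M q = a \<cdot>\<^sub>m evalM M q"
      using mult_smult_assoc_mat[OF one_carrier_mat c(2)] left_mult_one_mat[OF c(2)] by simp
    moreover have "(M * evalM M p) * evalM M q = M * (evalM M p * evalM M q)" using assoc_mult_mat[OF M c(1) c(2)] .
    ultimately show ?thesis by simp
  qed
  also have "\<dots> = (a \<cdot>\<^sub>m 1\<^sub>m n + M * evalM M p) * evalM M q"
    using M c by (intro add_mult_distrib_mat[symmetric]) auto
  finally show ?case by (simp add: evalM_pCons[OF M])
qed

lemma evalM_const: assumes M: "M \<in> carrier_mat n n"
  shows "evalM M [:a:] = a \<cdot>\<^sub>m 1\<^sub>m n"
  using M by (simp add: evalM_pCons[OF M])

lemma evalM_X: assumes M: "M \<in> carrier_mat n n"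
  shows "evalM M [:0,1:] = M"
proof -
  have "M * (1 \<cdot>\<^sub>m 1\<^sub>m n) = M" using M by (intro eq_matI) auto
  then show ?thesis using M by (simp add: evalM_pCons0[OF M] evalM_const[OF M])
qed

lemma evalM_minus: assumes M: "M \<in> carrier_mat n n"
  shows "evalM M (p - q) = evalM M p - evalM M q"
proof -
  have "p - q = p + smult (-1) q" by simp
  then have "evalM M (p - q) = evalM M (p + smult (-1) q)" by simp
  also have "\<dots> = evalM M p + (-1) \<cdot>\<^sub>m evalM M q" by (simp only: evalM_add[OF M] evalM_smult[OF M])
  also have "\<dots> = evalM M p - evalM M q"
    using evalM_carrier[OF M, of p] evalM_carrier[OF M, of q] by (intro eq_matI) auto
  finally show ?thesis .
qed

lemma evalM_commute: assumes M: "M \<in> carrier_mat n n" and X: "X \<in> carrier_mat n n"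
  and XM: "X * M = M * X"
  shows "X * evalM M p = evalM M p * X"
proof (induction p)
  case 0
  then show ?case using M X by simp
next
  case (pCons a p)
  have c: "evalM M p \<in> carrier_mat n n" using M by auto
  have "X * (a \<cdot>\<^sub>m 1\<^sub>m n + M * evalM M p) = X * (a \<cdot>\<^sub>m 1\<^sub>m n) + X * (M * evalM M p)"
    using X M c by (intro mult_add_distrib_mat[of _ n n]) auto
  also have "X * (a \<cdot>\<^sub>m 1\<^sub>m n) = (a \<cdot>\<^sub>m 1\<^sub>m n) * X"
    using mult_smult_distrib[OF X one_carrier_mat, of a] right_mult_one_mat[OF X]
      mult_smult_assoc_mat[OF one_carrier_mat X, of a] left_mult_one_mat[OF X] by simp
  also have "X * (M * evalM M p) = (M * evalM M p) * X"
    using assoc_mult_mat[OF X M c] assoc_mult_mat[OF M X c] assoc_mult_mat[OF M c X] pCons.IH XM by simp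
  also have "(a \<cdot>\<^sub>m 1\<^sub>m n) * X + (M * evalM M p) * X = (a \<cdot>\<^sub>m 1\<^sub>m n + M * evalM M p) * X"
    using X M c by (intro add_mult_distrib_mat[symmetric]) auto
  finally show ?case by (simp add: evalM_pCons[OF M])
qed

lemma evalM_eigen: assumes M: "M \<in> carrier_mat n n" and u: "u \<in> carrier_vec n"
  and e: "M *\<^sub>v u = e \<cdot>\<^sub>v u"
  shows "evalM M p *\<^sub>v u = poly p e \<cdot>\<^sub>v u"
proof (induction p)
  case 0
  then show ?case using M u by (intro eq_vecI) auto
next
  case (pCons a p)
  have c: "evalM M p \<in> carrier_mat n n" using M by auto
  have "(a \<cdot>\<^sub>m 1\<^sub>m n + M * evalM M p) *\<^sub>v u = a \<cdot>\<^sub>v u + M *\<^sub>v (evalM M p *\<^sub>v u)"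
    using M c u by (simp add: add_mult_distrib_mat_vec[of _ n n] smult_mat_mult_vec[of _ n n] assoc_mult_mat_vec[OF M c u])
  also have "\<dots> = a \<cdot>\<^sub>v u + poly p e \<cdot>\<^sub>v (e \<cdot>\<^sub>v u)"
    using pCons.IH M u by (simp add: mult_mat_vec e)
  also have "\<dots> = poly (pCons a p) e \<cdot>\<^sub>v u"
    using u by (intro eq_vecI) (auto simp: algebra_simps)
  finally show ?case by (simp add: evalM_pCons[OF M])
qed


lemma mat_eq_by_vec:
  fixes X Y :: "complex mat"
  assumes X: "X \<in> carrier_mat n m" and Y: "Y \<in> carrier_mat n m"
    and h: "\<And>v. v \<in> carrier_vec m \<Longrightarrow> X *\<^sub>v v = Y *\<^sub>v v"
  shows "X = Y"
proof (rule eq_matI)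
  fix i j assume i: "i < dim_row Y" and j: "j < dim_col Y"
  have "(X *\<^sub>v unit_vec m j) $ i = (Y *\<^sub>v unit_vec m j) $ i" using h[of "unit_vec m j"] by simp
  then show "X $$ (i,j) = Y $$ (i,j)" using X Y i j by simp
qed (use X Y in auto)

lemma evalM_lin: assumes M: "M \<in> carrier_mat n n"
  shows "evalM M [:c,1:] = c \<cdot>\<^sub>m 1\<^sub>m n + M"
proof -
  have "M * (1 \<cdot>\<^sub>m 1\<^sub>m n) = M" using M by (intro eq_matI) auto
  then show ?thesis using M by (simp add: evalM_pCons[OF M] evalM_const[OF M])
qed

lemma evalM_lin_vec: assumes M: "M \<in> carrier_mat n n" and v: "v \<in> carrier_vec n"
  shows "evalM M [:c,1:] *\<^sub>v v = c \<cdot>\<^sub>v v + M *\<^sub>v v"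
  using M v by (simp add: evalM_lin[OF M] add_mult_distrib_mat_vec[of _ n n] smult_mat_mult_vec[of _ n n])

lemma triangular_ch_aux:
  assumes B: "B \<in> carrier_mat n n" and ut: "upper_triangular B" and k: "k \<le> n"
  shows "\<forall>v\<in>carrier_vec n. (\<forall>i. k \<le> i \<longrightarrow> i < n \<longrightarrow> v $ i = 0) \<longrightarrow>
          evalM B (\<Prod>i<k. [:- (B $$ (i,i)), 1:]) *\<^sub>v v = 0\<^sub>v n"
  using k
proof (induction k)
  case 0
  show ?case
  proof (intro ballI impI)
    fix v :: "complex vec" assume v: "v \<in> carrier_vec n" and z: "\<forall>i. 0 \<le> i \<longrightarrow> i < n \<longrightarrow> v $ i = 0"
    then have "v = 0\<^sub>v n" by (intro eq_vecI) auto
    then show "evalM B (\<Prod>i<0. [:- (B $$ (i,i)), 1:]) *\<^sub>v v = 0\<^sub>v n"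
      using B evalM_carrier[OF B, of 1] by (intro eq_vecI) (auto simp: scalar_prod_def)
  qed
next
  case (Suc k)
  have kn: "k < n" using Suc by simp
  let ?T = "evalM B (\<Prod>i<k. [:- (B $$ (i,i)), 1:])"
  let ?L = "evalM B [:- (B $$ (k,k)), 1:]"
  have IH: "\<forall>v\<in>carrier_vec n. (\<forall>i. k \<le> i \<longrightarrow> i < n \<longrightarrow> v $ i = 0) \<longrightarrow> ?T *\<^sub>v v = 0\<^sub>v n"
    using Suc by simp
  show ?case
  proof (intro ballI impI)
    fix v :: "complex vec" assume v: "v \<in> carrier_vec n" and z: "\<forall>i. Suc k \<le> i \<longrightarrow> i < n \<longrightarrow> v $ i = 0"
    define w where "w = ?L *\<^sub>v v"
    have w: "w \<in> carrier_vec n" unfolding w_def using mult_mat_vec_carrier[OF evalM_carrier[OF B] v] .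
    have wz: "\<forall>i. k \<le> i \<longrightarrow> i < n \<longrightarrow> w $ i = 0"
    proof (intro allI impI)
      fix i assume ki: "k \<le> i" and i: "i < n"
      have "w $ i = - (B $$ (k,k)) * v $ i + (\<Sum>j<n. B $$ (i,j) * v $ j)"
        unfolding w_def using B v i by (simp add: evalM_lin_vec[OF B v] mult_mat_vec_sum[OF B v i] del: index_mult_mat_vec)
      also have "(\<Sum>j<n. B $$ (i,j) * v $ j) = (\<Sum>j<n. if j = i then B $$ (i,i) * v $ i else 0)"
      proof (rule sum.cong[OF refl])
        fix j assume j: "j \<in> {..<n}"
        show "B $$ (i,j) * v $ j = (if j = i then B $$ (i,i) * v $ i else 0)"
        proof (cases "j < i")
          case True
          then have "B $$ (i,j) = 0" using ut B i unfolding upper_triangular_def by auto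
          then show ?thesis using True by simp
        next
          case False
          then show ?thesis using z ki j by (cases "j = i") auto
        qed
      qed
      also have "\<dots> = B $$ (i,i) * v $ i" using i by simp
      finally have "w $ i = (B $$ (i,i) - B $$ (k,k)) * v $ i" by (simp add: algebra_simps)
      then show "w $ i = 0" using z ki i by (cases "i = k") auto
    qed
    have "(\<Prod>i<Suc k. [:- (B $$ (i,i)), 1:]) = (\<Prod>i<k. [:- (B $$ (i,i)), 1:]) * [:- (B $$ (k,k)), 1:]"
      by simp
    then have "evalM B (\<Prod>i<Suc k. [:- (B $$ (i,i)), 1:]) = ?T * ?L" by (simp only: evalM_mult[OF B])
    then have "evalM B (\<Prod>i<Suc k. [:- (B $$ (i,i)), 1:]) *\<^sub>v v = ?T *\<^sub>v w"
      unfolding w_def using B v by (simp add: assoc_mult_mat_vec[of _ n n _ n])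
    also have "\<dots> = 0\<^sub>v n" using IH w wz by blast
    finally show "evalM B (\<Prod>i<Suc k. [:- (B $$ (i,i)), 1:]) *\<^sub>v v = 0\<^sub>v n" .
  qed
qed

lemma triangular_ch:
  assumes B: "B \<in> carrier_mat n n" and ut: "upper_triangular B"
  shows "evalM B (\<Prod>e\<leftarrow>diag_mat B. [:- e, 1:]) = 0\<^sub>m n n"
proof -
  have "(\<Prod>e\<leftarrow>diag_mat B. [:- e, 1:]) = (\<Prod>i<n. [:- (B $$ (i,i)), 1:])"
    using B unfolding diag_mat_def by (simp add: prod.distinct_set_conv_list[symmetric] lessThan_atLeast0 comp_def)
  then show ?thesis
    using triangular_ch_aux[OF B ut le_refl] B
    by (intro mat_eq_by_vec[of _ n n]) auto
qed

lemma evalM_intertwine: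
  assumes A: "A \<in> carrier_mat n n" and B: "B \<in> carrier_mat n n" and P: "P \<in> carrier_mat n n"
    and AP: "A * P = P * B"
  shows "evalM A p * P = P * evalM B p"
proof (induction p)
  case 0
  then show ?case using A B P by (simp add: left_mult_zero_mat[of _ n n] right_mult_zero_mat[of _ n n])
next
  case (pCons a p)
  have cA: "evalM A p \<in> carrier_mat n n" using A by simp
  have cB: "evalM B p \<in> carrier_mat n n" using B by simp
  have "(a \<cdot>\<^sub>m 1\<^sub>m n + A * evalM A p) * P = (a \<cdot>\<^sub>m 1\<^sub>m n) * P + (A * evalM A p) * P"
    using A P cA by (intro add_mult_distrib_mat) auto
  also have "(a \<cdot>\<^sub>m 1\<^sub>m n) * P = P * (a \<cdot>\<^sub>m 1\<^sub>m n)"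
    using mult_smult_distrib[OF P one_carrier_mat, of a] right_mult_one_mat[OF P]
      mult_smult_assoc_mat[OF one_carrier_mat P, of a] left_mult_one_mat[OF P] by simp
  also have "(A * evalM A p) * P = A * (evalM A p * P)" by (rule assoc_mult_mat[OF A cA P])
  also have "\<dots> = A * (P * evalM B p)" using pCons by simp
  also have "\<dots> = (A * P) * evalM B p" by (rule assoc_mult_mat[OF A P cB, symmetric])
  also have "\<dots> = (P * B) * evalM B p" using AP by simp
  also have "\<dots> = P * (B * evalM B p)" by (rule assoc_mult_mat[OF P B cB])
  also have "P * (a \<cdot>\<^sub>m 1\<^sub>m n) + P * (B * evalM B p) = P * (a \<cdot>\<^sub>m 1\<^sub>m n + B * evalM B p)"
    using P B cB by (intro mult_add_distrib_mat[symmetric]) auto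
  finally show ?case by (simp add: evalM_pCons[OF A] evalM_pCons[OF B])
qed

lemma evalM_similar:
  assumes A: "A \<in> carrier_mat n n" and B: "B \<in> carrier_mat n n" and P: "P \<in> carrier_mat n n"
    and Q: "Q \<in> carrier_mat n n" and PQ: "P * Q = 1\<^sub>m n" and QP: "Q * P = 1\<^sub>m n" and APBQ: "A = P * B * Q"
  shows "evalM A p = P * evalM B p * Q"
proof -
  have "A * P = P * B * (Q * P)" unfolding APBQ
    by (rule assoc_mult_mat[OF mult_carrier_mat[OF P B] Q P])
  then have AP: "A * P = P * B" using QP P B by simp
  have cA: "evalM A p \<in> carrier_mat n n" using A by simp
  have "evalM A p = evalM A p * (P * Q)" using PQ cA by simp
  also have "\<dots> = (evalM A p * P) * Q" by (rule assoc_mult_mat[OF cA P Q, symmetric])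
  also have "\<dots> = P * evalM B p * Q" using evalM_intertwine[OF A B P AP] by simp
  finally show ?thesis .
qed

theorem cayley_hamilton_complex:
  assumes A: "(A :: complex mat) \<in> carrier_mat n n"
  shows "evalM A (char_poly A) = 0\<^sub>m n n"
proof -
  obtain es where es: "char_poly A = (\<Prod>a\<leftarrow>es. [:- a, 1:])" using char_poly_factorized[OF A] by blast
  obtain B P Q where sd: "schur_decomposition A es = (B,P,Q)" by (cases "schur_decomposition A es") auto
  from schur_decomposition[OF A es sd]
  have sim: "similar_mat_wit A B P Q" and ut: "upper_triangular B" and d: "diag_mat B = es" by auto
  from similar_mat_witD2[OF A sim] have B: "B \<in> carrier_mat n n" and P: "P \<in> carrier_mat n n"
    and Q: "Q \<in> carrier_mat n n" and PQ: "P * Q = 1\<^sub>m n" and QP: "Q * P = 1\<^sub>m n" and APBQ: "A = P * B * Q"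
    by auto
  have "evalM A (char_poly A) = P * evalM B (\<Prod>a\<leftarrow>diag_mat B. [:- a, 1:]) * Q"
    unfolding es d[symmetric] by (rule evalM_similar[OF A B P Q PQ QP APBQ])
  also have "\<dots> = 0\<^sub>m n n" using triangular_ch[OF B ut] P Q
    by (simp add: right_mult_zero_mat[of _ n n] left_mult_zero_mat[of _ n n])
  finally show ?thesis .
qed


definition realp :: "complex poly \<Rightarrow> bool" where
  "realp p \<longleftrightarrow> (\<forall>i. coeff p i \<in> \<real>)"

lemma realp_0[simp]: "realp 0" unfolding realp_def by simp
lemma realp_pCons[simp]: "realp (pCons a p) \<longleftrightarrow> a \<in> \<real> \<and> realp p"
  unfolding realp_def
  by (metis coeff_pCons_0 coeff_pCons_Suc nat.exhaust)
lemma realp_add[simp]: "realp p \<Longrightarrow> realp q \<Longrightarrow> realp (p + q)"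
  unfolding realp_def by simp
lemma realp_minus[simp]: "realp p \<Longrightarrow> realp q \<Longrightarrow> realp (p - q)"
  unfolding realp_def by simp
lemma realp_smult[simp]: "a \<in> \<real> \<Longrightarrow> realp p \<Longrightarrow> realp (smult a p)"
  unfolding realp_def by simp
lemma realp_mult[simp]: "realp p \<Longrightarrow> realp q \<Longrightarrow> realp (p * q)"
  unfolding realp_def coeff_mult by (intro allI sum_in_Reals) auto
lemma realp_1[simp]: "realp 1" unfolding realp_def by (simp add: coeff_1)
lemma realp_sum: "(\<And>x. x \<in> S \<Longrightarrow> realp (f x)) \<Longrightarrow> realp (\<Sum>x\<in>S. f x)"
  unfolding realp_def by (simp add: coeff_sum)
lemma realp_prod: "(\<And>x. x \<in> S \<Longrightarrow> realp (f x)) \<Longrightarrow> realp (\<Prod>x\<in>S. f x)"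
  by (induction S rule: infinite_finite_induct) auto
lemma realp_power[simp]: "realp p \<Longrightarrow> realp (p ^ m)"
  by (induction m) auto

lemma herm_entry: "herm_mat n H \<Longrightarrow> i < n \<Longrightarrow> j < n \<Longrightarrow> H $$ (i,j) = cnj (H $$ (j,i))"
  unfolding herm_mat_def by blast

lemma herm_matI:
  assumes "H \<in> carrier_mat n n" "\<And>i j. i < n \<Longrightarrow> j < n \<Longrightarrow> H $$ (i,j) = cnj (H $$ (j,i))"
  shows "herm_mat n H"
  using assms unfolding herm_mat_def by blast

lemma herm_lincomb:
  assumes X: "herm_mat n X" and Y: "herm_mat n Y" and a: "a \<in> \<real>" and b: "b \<in> \<real>"
  shows "herm_mat n (a \<cdot>\<^sub>m X + b \<cdot>\<^sub>m Y)"
proof (rule herm_matI)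
  have Xc: "X \<in> carrier_mat n n" and Yc: "Y \<in> carrier_mat n n" using X Y herm_carrier by auto
  then show "a \<cdot>\<^sub>m X + b \<cdot>\<^sub>m Y \<in> carrier_mat n n" by simp
  fix i j assume i: "i < n" and j: "j < n"
  have "cnj a = a" "cnj b = b" using a b Reals_cnj_iff by auto
  then show "(a \<cdot>\<^sub>m X + b \<cdot>\<^sub>m Y) $$ (i,j) = cnj ((a \<cdot>\<^sub>m X + b \<cdot>\<^sub>m Y) $$ (j,i))"
    using Xc Yc i j herm_entry[OF X i j] herm_entry[OF Y i j] by simp
qed

lemma herm_one: "herm_mat n (1\<^sub>m n)"
  by (rule herm_matI) auto

lemma mult_mat_entry:
  assumes "X \<in> carrier_mat n n" "Y \<in> carrier_mat n n" "i < n" "j < n"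
  shows "(X * Y) $$ (i,j) = (\<Sum>l<n. X $$ (i,l) * Y $$ (l,j))"
  using assms by (simp add: scalar_prod_def lessThan_atLeast0)

lemma herm_mult_comm:
  assumes X: "herm_mat n X" and Y: "herm_mat n Y" and XY: "X * Y = Y * X"
  shows "herm_mat n (X * Y)"
proof (rule herm_matI)
  have Xc: "X \<in> carrier_mat n n" and Yc: "Y \<in> carrier_mat n n" using X Y herm_carrier by auto
  then show "X * Y \<in> carrier_mat n n" by simp
  fix i j assume i: "i < n" and j: "j < n"
  have "(X * Y) $$ (i,j) = (Y * X) $$ (i,j)" using XY by simp
  also have "\<dots> = (\<Sum>l<n. Y $$ (i,l) * X $$ (l,j))" by (rule mult_mat_entry[OF Yc Xc i j])
  also have "\<dots> = (\<Sum>l<n. cnj (X $$ (j,l) * Y $$ (l,i)))"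
  proof (rule sum.cong[OF refl])
    fix l assume l: "l \<in> {..<n}"
    show "Y $$ (i,l) * X $$ (l,j) = cnj (X $$ (j,l) * Y $$ (l,i))"
      using herm_entry[OF X, of l j] herm_entry[OF Y, of i l] i j l by simp
  qed
  also have "\<dots> = cnj ((X * Y) $$ (j,i))" by (simp add: mult_mat_entry[OF Xc Yc j i] cnj_sum)
  finally show "(X * Y) $$ (i,j) = cnj ((X * Y) $$ (j,i))" .
qed

lemma evalM_herm:
  assumes M: "herm_mat n M" and r: "realp p"
  shows "herm_mat n (evalM M p)"
  using r
proof (induction p)
  case 0
  have "herm_mat n (0\<^sub>m n n)" by (rule herm_matI) auto
  then show ?case using herm_carrier[OF M] by simp
next
  case (pCons a p)
  have Mc: "M \<in> carrier_mat n n" using herm_carrier[OF M] .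
  have hp: "herm_mat n (evalM M p)" using pCons by simp
  have "herm_mat n (M * evalM M p)"
    by (rule herm_mult_comm[OF M hp evalM_commute[OF Mc Mc refl]])
  then have "herm_mat n (a \<cdot>\<^sub>m 1\<^sub>m n + 1 \<cdot>\<^sub>m (M * evalM M p))"
    using pCons by (intro herm_lincomb herm_one) auto
  moreover have "1 \<cdot>\<^sub>m (M * evalM M p) = M * evalM M p"
    using Mc by (intro eq_matI) auto
  ultimately show ?case by (simp add: evalM_pCons[OF Mc])
qed

definition spec :: "complex mat \<Rightarrow> complex set" where
  "spec M = {e. eigenvalue M e}"

lemma spec_finite: assumes M: "M \<in> carrier_mat n n" shows "finite (spec M)"
proof -
  have "char_poly M \<noteq> 0" using degree_monic_char_poly[OF M] by auto
  then have "finite {x. poly (char_poly M) x = 0}" by (rule poly_roots_finite)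
  moreover have "spec M = {x. poly (char_poly M) x = 0}"
    unfolding spec_def using eigenvalue_root_char_poly[OF M] by auto
  ultimately show ?thesis by simp
qed

lemma spec_eigvec: assumes M: "M \<in> carrier_mat n n" and e: "e \<in> spec M"
  shows "\<exists>u. u \<in> carrier_vec n \<and> u \<noteq> 0\<^sub>v n \<and> M *\<^sub>v u = e \<cdot>\<^sub>v u"
  using e M unfolding spec_def eigenvalue_def eigenvector_def by auto

lemma eig_real:
  assumes M: "herm_mat n M" and u: "u \<in> carrier_vec n" and u0: "u \<noteq> 0\<^sub>v n" and e: "M *\<^sub>v u = e \<cdot>\<^sub>v u"
  shows "e \<in> \<real>"
proof -
  have Mc: "M \<in> carrier_mat n n" using herm_carrier[OF M] .
  have "ip (M *\<^sub>v u) u = ip u (M *\<^sub>v u)" by (rule herm_ip[OF M u u])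
  then have "cnj e * ip u u = e * ip u u" using u by (simp add: e ip_smult_left ip_smult_right)
  moreover have "ip u u \<noteq> 0" using ip_self_zero[of u] u u0 by auto
  ultimately have "cnj e = e" by simp
  then show ?thesis using Reals_cnj_iff by auto
qed

lemma spec_real: assumes M: "herm_mat n M" and e: "e \<in> spec M" shows "e \<in> \<real>"
  using spec_eigvec[OF herm_carrier[OF M] e] eig_real[OF M] by blast

lemma herm_sq_zero:
  assumes H: "herm_mat n H" and w: "w \<in> carrier_vec n" and z: "H *\<^sub>v (H *\<^sub>v w) = 0\<^sub>v n"
  shows "H *\<^sub>v w = 0\<^sub>v n"
proof -
  have Hc: "H \<in> carrier_mat n n" using herm_carrier[OF H] .
  have "ip (H *\<^sub>v w) (H *\<^sub>v w) = ip w (H *\<^sub>v (H *\<^sub>v w))" using herm_ip[OF H w] Hc w by simp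
  also have "\<dots> = 0" unfolding z ip_def by (intro sum.neutral) (use w in auto)
  finally show ?thesis using ip_self_zero[of "H *\<^sub>v w"] Hc by simp
qed

lemma nilp_zero:
  assumes M: "herm_mat n M" and r: "realp r"
  shows "evalM M (r ^ Suc m) = 0\<^sub>m n n \<Longrightarrow> evalM M r = 0\<^sub>m n n"
proof (induction m)
  case 0
  then show ?case by simp
next
  case (Suc m)
  have Mc: "M \<in> carrier_mat n n" using herm_carrier[OF M] .
  have H: "herm_mat n (evalM M r)" by (rule evalM_herm[OF M r])
  have "evalM M (r ^ Suc m) = 0\<^sub>m n n"
  proof (rule mat_eq_by_vec[of _ n n])
    fix v :: "complex vec" assume v: "v \<in> carrier_vec n"
    define w where "w = evalM M (r ^ m) *\<^sub>v v"
    have w: "w \<in> carrier_vec n" unfolding w_def using mult_mat_vec_carrier[OF evalM_carrier[OF Mc] v] .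
    have cE: "evalM M r \<in> carrier_mat n n" and cF: "evalM M (r ^ m) \<in> carrier_mat n n" using Mc by auto
    have p1: "evalM M (r ^ Suc m) = evalM M r * evalM M (r ^ m)" by (simp only: power_Suc evalM_mult[OF Mc])
    have p2: "evalM M (r ^ Suc (Suc m)) = evalM M r * (evalM M r * evalM M (r ^ m))"
      by (simp only: power_Suc evalM_mult[OF Mc])
    have e1: "evalM M (r ^ Suc m) *\<^sub>v v = evalM M r *\<^sub>v w"
      unfolding w_def p1 by (rule assoc_mult_mat_vec[OF cE cF v])
    have "evalM M (r ^ Suc (Suc m)) *\<^sub>v v = evalM M r *\<^sub>v (evalM M r *\<^sub>v w)"
      unfolding p2 w_def using assoc_mult_mat_vec[OF cE mult_carrier_mat[OF cE cF] v] assoc_mult_mat_vec[OF cE cF v] by simp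
    moreover have "0\<^sub>m n n *\<^sub>v v = 0\<^sub>v n" using v by (intro eq_vecI) (auto simp: scalar_prod_def)
    ultimately have "evalM M r *\<^sub>v (evalM M r *\<^sub>v w) = 0\<^sub>v n" using Suc.prems by simp
    then have "evalM M r *\<^sub>v w = 0\<^sub>v n" by (rule herm_sq_zero[OF H w])
    moreover have "0\<^sub>m n n *\<^sub>v v = 0\<^sub>v n" using v by (intro eq_vecI) (auto simp: scalar_prod_def)
    ultimately show "evalM M (r ^ Suc m) *\<^sub>v v = 0\<^sub>m n n *\<^sub>v v" using e1 by simp
  qed (use Mc in auto)
  then show ?case by (rule Suc.IH)
qed

lemma prod_dvd_power:
  assumes fin: "finite S" and sub: "set as \<subseteq> S"
  shows "(\<Prod>a\<leftarrow>as. [:- a, 1:]) dvd (\<Prod>e\<in>S. [:- e, 1:]) ^ length as"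
  using sub
proof (induction as)
  case Nil
  then show ?case by simp
next
  case (Cons a as)
  have "[:- a, 1:] dvd (\<Prod>e\<in>S. [:- e, 1:])" using Cons.prems fin by (intro dvd_prodI) auto
  moreover have "(\<Prod>a\<leftarrow>as. [:- a, 1:]) dvd (\<Prod>e\<in>S. [:- e, 1:]) ^ length as" using Cons by simp
  ultimately have "[:- a, 1:] * (\<Prod>a\<leftarrow>as. [:- a, 1:]) dvd (\<Prod>e\<in>S. [:- e, 1:]) * (\<Prod>e\<in>S. [:- e, 1:]) ^ length as"
    by (rule mult_dvd_mono)
  then show ?case by (simp only: prod_list.Cons list.map length_Cons power_Suc)
qed

lemma prod_spec_zero:
  assumes M: "herm_mat n M" and n: "n \<ge> 1"
  shows "evalM M (\<Prod>e\<in>spec M. [:- e, 1:]) = 0\<^sub>m n n"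
proof -
  have Mc: "M \<in> carrier_mat n n" using herm_carrier[OF M] .
  obtain as where as: "char_poly M = (\<Prod>a\<leftarrow>as. [:- a, 1:])" "length as = n"
    using char_poly_factorized[OF Mc] by blast
  have sub: "set as \<subseteq> spec M"
  proof
    fix a assume a: "a \<in> set as"
    have "poly (char_poly M) a = 0" unfolding as(1) using a
      by (force simp: poly_prod_list prod_list_zero_iff)
    then show "a \<in> spec M" unfolding spec_def using eigenvalue_root_char_poly[OF Mc] by simp
  qed
  let ?r = "\<Prod>e\<in>spec M. [:- e, 1:]"
  obtain h where h: "?r ^ n = char_poly M * h"
    using prod_dvd_power[OF spec_finite[OF Mc] sub] as by (auto elim: dvdE)
  have "evalM M (?r ^ n) = 0\<^sub>m n n"
    unfolding h evalM_mult[OF Mc] cayley_hamilton_complex[OF Mc] using Mc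
    by (simp add: left_mult_zero_mat[of _ n n])
  moreover have "realp ?r" using spec_real[OF M] by (intro realp_prod) auto
  moreover obtain m where "n = Suc m" using n by (cases n) auto
  ultimately show ?thesis using nilp_zero[OF M] by blast
qed

lemma prod_roots_dvd:
  fixes f :: "complex poly"
  assumes fin: "finite S" and z: "\<forall>e\<in>S. poly f e = 0"
  shows "(\<Prod>e\<in>S. [:- e, 1:]) dvd f"
  using fin z
proof (induction S rule: finite_induct)
  case empty
  then show ?case by simp
next
  case (insert a S)
  then have "(\<Prod>e\<in>S. [:- e, 1:]) dvd f" by simp
  then obtain g where g: "f = (\<Prod>e\<in>S. [:- e, 1:]) * g" by (rule dvdE)
  have ne: "- e + a \<noteq> 0" if "e \<in> S" for e
  proof
    assume h: "- e + a = 0"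
    have "a = e + (- e + a)" by (rule add_minus_cancel[symmetric])
    also have "\<dots> = e" using h by simp
    finally have "a = e" .
    then show False using that insert.hyps by simp
  qed
  have "poly (\<Prod>e\<in>S. [:- e, 1:]) a \<noteq> 0" using insert.hyps ne by (simp add: poly_prod prod_zero_iff)
  moreover have "poly f a = 0" using insert.prems by simp
  ultimately have "poly g a = 0" using g by simp
  then have "[:- a, 1:] dvd g" using poly_eq_0_iff_dvd by blast
  then obtain g' where "g = [:- a, 1:] * g'" by (rule dvdE)
  then have "f = (\<Prod>e\<in>insert a S. [:- e, 1:]) * g'" using g
    by (simp only: prod.insert[OF insert.hyps] ac_simps)
  then show ?case by (rule dvdI)
qed

lemma evalM_vanish:
  assumes M: "herm_mat n M" and n: "n \<ge> 1" and z: "\<forall>e\<in>spec M. poly f e = 0"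
  shows "evalM M f = 0\<^sub>m n n"
proof -
  have Mc: "M \<in> carrier_mat n n" using herm_carrier[OF M] .
  obtain g where "f = (\<Prod>e\<in>spec M. [:- e, 1:]) * g"
    using prod_roots_dvd[OF spec_finite[OF Mc] z] by (rule dvdE)
  then show ?thesis using prod_spec_zero[OF M n] Mc
    by (simp add: evalM_mult[OF Mc] left_mult_zero_mat[of _ n n])
qed


definition lbasis :: "complex set \<Rightarrow> complex \<Rightarrow> complex poly" where
  "lbasis S e = (\<Prod>e'\<in>S - {e}. smult (1 / (e - e')) [:- e', 1:])"

definition interp :: "complex set \<Rightarrow> (complex \<Rightarrow> complex) \<Rightarrow> complex poly" where
  "interp S y = (\<Sum>e\<in>S. smult (y e) (lbasis S e))"

lemma poly_lbasis:
  assumes fin: "finite S" and e: "e \<in> S" and x: "x \<in> S"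
  shows "poly (lbasis S e) x = (if x = e then 1 else 0)"
proof (cases "x = e")
  case True
  have "poly (lbasis S e) x = (\<Prod>e'\<in>S - {e}. 1)"
    unfolding lbasis_def poly_prod
  proof (rule prod.cong[OF refl])
    fix e' assume "e' \<in> S - {e}"
    then have "e - e' \<noteq> 0" by auto
    have "poly (smult (1 / (e - e')) [:- e', 1:]) x = (1 / (e - e')) * (- e' + x)" by (simp add: diff_divide_distrib)
    also have "- e' + x = e - e'" using True by simp
    also have "(1 / (e - e')) * (e - e') = 1" using \<open>e - e' \<noteq> 0\<close> by simp
    finally show "poly (smult (1 / (e - e')) [:- e', 1:]) x = 1" .
  qed
  then show ?thesis using True by simp
next
  case False
  have "x \<in> S - {e}" using x False by simp
  moreover have "poly (smult (1 / (e - x)) [:- x, 1:]) x = 0" by simp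
  ultimately have ex: "\<exists>a\<in>S - {e}. poly (smult (1 / (e - a)) [:- a, 1:]) x = 0" by blast
  have "poly (lbasis S e) x = 0"
    unfolding lbasis_def poly_prod by (rule prod_zero[OF finite_Diff[OF fin] ex])
  then show ?thesis using False by simp
qed

lemma poly_interp:
  assumes fin: "finite S" and x: "x \<in> S"
  shows "poly (interp S y) x = y x"
proof -
  have "poly (interp S y) x = (\<Sum>e\<in>S. if e = x then y e else 0)"
    unfolding interp_def poly_sum
  proof (rule sum.cong[OF refl])
    fix e assume e: "e \<in> S"
    show "poly (smult (y e) (lbasis S e)) x = (if e = x then y e else 0)"
      using poly_lbasis[OF fin e x] by auto
  qed
  also have "\<dots> = y x" using fin x by simp
  finally show ?thesis .
qed

lemma realp_lbasis: assumes "S \<subseteq> \<real>" "e \<in> \<real>" shows "realp (lbasis S e)"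
  unfolding lbasis_def using assms by (intro realp_prod) auto

lemma realp_interp: assumes "S \<subseteq> \<real>" "\<And>e. e \<in> S \<Longrightarrow> y e \<in> \<real>" shows "realp (interp S y)"
  unfolding interp_def using assms by (intro realp_sum realp_smult realp_lbasis) auto

lemma evalM_one: assumes M: "M \<in> carrier_mat n n" shows "evalM M 1 = 1\<^sub>m n"
proof -
  have "evalM M 1 = evalM M [:1:]" by (simp only: one_pCons)
  also have "\<dots> = 1 \<cdot>\<^sub>m 1\<^sub>m n" by (rule evalM_const[OF M])
  also have "\<dots> = 1\<^sub>m n" by (intro eq_matI) auto
  finally show ?thesis .
qed

lemma mat_minus_zero_eq:
  fixes X Y :: "complex mat"
  assumes "X \<in> carrier_mat n n" "Y \<in> carrier_mat n n" "X - Y = 0\<^sub>m n n"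
  shows "X = Y"
proof (rule eq_matI)
  fix i j assume "i < dim_row Y" "j < dim_col Y"
  then have "X $$ (i,j) - Y $$ (i,j) = (X - Y) $$ (i,j)" using assms(1,2) by simp
  also have "\<dots> = 0" using assms \<open>i < dim_row Y\<close> \<open>j < dim_col Y\<close> by simp
  finally show "X $$ (i,j) = Y $$ (i,j)" by simp
qed (use assms in auto)

lemma evalM_eq_on_spec:
  assumes M: "herm_mat n M" and n: "n \<ge> 1" and eq: "\<forall>e\<in>spec M. poly f e = poly g e"
  shows "evalM M f = evalM M g"
proof -
  have Mc: "M \<in> carrier_mat n n" using herm_carrier[OF M] .
  have "\<forall>e\<in>spec M. poly (f - g) e = 0" using eq by simp
  then have "evalM M (f - g) = 0\<^sub>m n n" by (rule evalM_vanish[OF M n])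
  then have "evalM M f - evalM M g = 0\<^sub>m n n" by (simp only: evalM_minus[OF Mc])
  then show ?thesis by (rule mat_minus_zero_eq[OF evalM_carrier[OF Mc] evalM_carrier[OF Mc]])
qed

lemma spec_of_real: assumes M: "herm_mat n M" and e: "e \<in> spec M" shows "e = complex_of_real (Re e)"
  using spec_real[OF M e] by (simp add: complex_is_Real_iff complex_eq_iff)

lemma psd_square:
  assumes G: "herm_mat n G"
  shows "psd_mat n (G * G)"
  unfolding psd_mat_def
proof (intro conjI ballI)
  have Gc: "G \<in> carrier_mat n n" using herm_carrier[OF G] .
  show "herm_mat n (G * G)" by (rule herm_mult_comm[OF G G refl])
  fix v :: "complex vec" assume v: "v \<in> carrier_vec n"
  have "quad_form (G * G) v = ip v (G *\<^sub>v (G *\<^sub>v v))"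
    using quad_form_ip[OF mult_carrier_mat[OF Gc Gc] v] assoc_mult_mat_vec[OF Gc Gc v] by simp
  also have "\<dots> = ip (G *\<^sub>v v) (G *\<^sub>v v)" using herm_ip[OF G v] Gc v by simp
  finally show "0 \<le> Re (quad_form (G * G) v)" using ip_self_ge0 by simp
qed

lemma evalM_psd:
  assumes M: "herm_mat n M" and n: "n \<ge> 1"
    and pos: "\<And>e. e \<in> spec M \<Longrightarrow> poly f e \<in> \<real> \<and> 0 \<le> Re (poly f e)"
  shows "psd_mat n (evalM M f)"
proof -
  have Mc: "M \<in> carrier_mat n n" using herm_carrier[OF M] .
  define g where "g = interp (spec M) (\<lambda>e. complex_of_real (sqrt (Re (poly f e))))"
  have fin: "finite (spec M)" by (rule spec_finite[OF Mc])
  have rg: "realp g" unfolding g_def using spec_real[OF M] by (intro realp_interp) auto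
  have "\<forall>e\<in>spec M. poly f e = poly (g * g) e"
  proof
    fix e assume e: "e \<in> spec M"
    have s: "sqrt (Re (poly f e)) * sqrt (Re (poly f e)) = Re (poly f e)" using pos[OF e] by simp
    have "poly (g * g) e = complex_of_real (sqrt (Re (poly f e))) * complex_of_real (sqrt (Re (poly f e)))"
      unfolding g_def using poly_interp[OF fin e] by simp
    also have "\<dots> = complex_of_real (Re (poly f e))" by (metis of_real_mult s)
    also have "\<dots> = poly f e" using pos[OF e] by (simp add: complex_is_Real_iff complex_eq_iff)
    finally show "poly f e = poly (g * g) e" by simp
  qed
  then have "evalM M f = evalM M g * evalM M g"
    using evalM_eq_on_spec[OF M n] evalM_mult[OF Mc] by metis
  then show ?thesis using psd_square[OF evalM_herm[OF M rg]] by simp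
qed

lemma eigen_proj:
  assumes M: "herm_mat n M" and n: "n \<ge> 1" and a: "a \<in> spec M" and v: "v \<in> carrier_vec n"
  shows "M *\<^sub>v (evalM M (lbasis (spec M) a) *\<^sub>v v) = a \<cdot>\<^sub>v (evalM M (lbasis (spec M) a) *\<^sub>v v)"
proof -
  have Mc: "M \<in> carrier_mat n n" using herm_carrier[OF M] .
  have fin: "finite (spec M)" by (rule spec_finite[OF Mc])
  define w where "w = evalM M (lbasis (spec M) a) *\<^sub>v v"
  have w: "w \<in> carrier_vec n" unfolding w_def using mult_mat_vec_carrier[OF evalM_carrier[OF Mc] v] .
  have "evalM M ([:- a, 1:] * lbasis (spec M) a) = 0\<^sub>m n n"
    using fin a by (intro evalM_vanish[OF M n]) (auto simp: poly_lbasis)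
  then have "evalM M [:- a, 1:] *\<^sub>v w = 0\<^sub>m n n *\<^sub>v v"
    unfolding w_def evalM_mult[OF Mc]
    using assoc_mult_mat_vec[OF evalM_carrier[OF Mc] evalM_carrier[OF Mc] v] by metis
  also have "0\<^sub>m n n *\<^sub>v v = 0\<^sub>v n" using v by (intro eq_vecI) (auto simp: scalar_prod_def)
  finally have "(- a) \<cdot>\<^sub>v w + M *\<^sub>v w = 0\<^sub>v n" using evalM_lin_vec[OF Mc w] by simp
  then have "M *\<^sub>v w = a \<cdot>\<^sub>v w"
  proof -
    assume h: "(- a) \<cdot>\<^sub>v w + M *\<^sub>v w = 0\<^sub>v n"
    show ?thesis
    proof (rule eq_vecI)
      fix i assume i: "i < dim_vec (a \<cdot>\<^sub>v w)"
      then have "((- a) \<cdot>\<^sub>v w + M *\<^sub>v w) $ i = 0" using h w by simp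
      then show "(M *\<^sub>v w) $ i = (a \<cdot>\<^sub>v w) $ i" using i w Mc by (simp add: algebra_simps)
    qed (use w Mc in simp)
  qed
  then show ?thesis unfolding w_def .
qed

lemma eq_on_eigvecs:
  fixes X Y :: "complex mat"
  assumes M: "herm_mat n M" and n: "n \<ge> 1" and X: "X \<in> carrier_mat n n" and Y: "Y \<in> carrier_mat n n"
    and h: "\<And>e u. e \<in> spec M \<Longrightarrow> u \<in> carrier_vec n \<Longrightarrow> M *\<^sub>v u = e \<cdot>\<^sub>v u \<Longrightarrow> X *\<^sub>v u = Y *\<^sub>v u"
  shows "X = Y"
proof (rule mat_eq_by_vec[OF X Y])
  fix v :: "complex vec" assume v: "v \<in> carrier_vec n"
  have Mc: "M \<in> carrier_mat n n" using herm_carrier[OF M] .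
  have fin: "finite (spec M)" by (rule spec_finite[OF Mc])
  have gen: "T \<subseteq> spec M \<Longrightarrow> X *\<^sub>v (evalM M (\<Sum>e\<in>T. lbasis (spec M) e) *\<^sub>v v) =
                                 Y *\<^sub>v (evalM M (\<Sum>e\<in>T. lbasis (spec M) e) *\<^sub>v v)" for T
    using finite_subset[OF _ fin, of T]
  proof (induction T rule: infinite_finite_induct)
    case (infinite T)
    then show ?case by blast
  next
    case empty
    have "0\<^sub>m n n *\<^sub>v v = 0\<^sub>v n" using v by (intro eq_vecI) (auto simp: scalar_prod_def)
    moreover have "X *\<^sub>v 0\<^sub>v n = 0\<^sub>v n" using X by (intro eq_vecI) (auto simp: scalar_prod_def)
    moreover have "Y *\<^sub>v 0\<^sub>v n = 0\<^sub>v n" using Y by (intro eq_vecI) (auto simp: scalar_prod_def)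
    ultimately show ?case using X Y Mc by simp
  next
    case (insert a T)
    define w where "w = evalM M (lbasis (spec M) a) *\<^sub>v v"
    define z where "z = evalM M (\<Sum>e\<in>T. lbasis (spec M) e) *\<^sub>v v"
    have w: "w \<in> carrier_vec n" unfolding w_def using mult_mat_vec_carrier[OF evalM_carrier[OF Mc] v] .
    have z: "z \<in> carrier_vec n" unfolding z_def using mult_mat_vec_carrier[OF evalM_carrier[OF Mc] v] .
    have a: "a \<in> spec M" using insert by simp
    have "evalM M (\<Sum>e\<in>insert a T. lbasis (spec M) e) *\<^sub>v v = w + z"
      unfolding w_def z_def using insert.hyps v Mc
      by (simp add: evalM_add[OF Mc] add_mult_distrib_mat_vec[OF evalM_carrier[OF Mc] evalM_carrier[OF Mc] v])
    moreover have "X *\<^sub>v w = Y *\<^sub>v w" unfolding w_def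
      by (rule h[OF a mult_mat_vec_carrier[OF evalM_carrier[OF Mc] v] eigen_proj[OF M n a v]])
    moreover have "X *\<^sub>v z = Y *\<^sub>v z" unfolding z_def using insert by simp
    ultimately show ?case using X Y w z by (simp add: mult_add_distrib_mat_vec[OF X w z] mult_add_distrib_mat_vec[OF Y w z])
  qed
  have "evalM M (\<Sum>e\<in>spec M. lbasis (spec M) e) = evalM M 1"
    using fin by (intro evalM_eq_on_spec[OF M n]) (auto simp: poly_sum poly_lbasis)
  then have "evalM M (\<Sum>e\<in>spec M. lbasis (spec M) e) *\<^sub>v v = v" using evalM_one[OF Mc] v by simp
  then show "X *\<^sub>v v = Y *\<^sub>v v" using gen[OF subset_refl] by simp
qed


lemma ip_self_real: "ip x x = complex_of_real (Re (ip x x))"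
  unfolding ip_self by simp

lemma ip_Re_vnorm: "Re (ip x x) = (vnorm x)\<^sup>2"
  unfolding ip_self_vnorm by simp

lemma ip_le0_zero: assumes "Re (ip x x) \<le> 0" shows "x = 0\<^sub>v (dim_vec x)"
proof -
  have "Re (ip x x) = 0" using assms ip_self_ge0[of x] by simp
  then have "ip x x = 0" using ip_self_real[of x] by simp
  then show ?thesis by (rule ip_self_zero)
qed

lemma psd_carrier: "psd_mat n P \<Longrightarrow> P \<in> carrier_mat n n"
  unfolding psd_mat_def using herm_carrier by blast
lemma psd_herm: "psd_mat n P \<Longrightarrow> herm_mat n P"
  unfolding psd_mat_def by blast
lemma psd_quad: assumes "psd_mat n P" "u \<in> carrier_vec n" shows "0 \<le> Re (ip u (P *\<^sub>v u))"
proof -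
  have "0 \<le> Re (quad_form P u)" using assms unfolding psd_mat_def by blast
  then show ?thesis using quad_form_ip[OF psd_carrier[OF assms(1)] assms(2)] by simp
qed

lemma ip_zero_left: "ip (0\<^sub>v n) w = 0" unfolding ip_def by simp

lemma zero_mult_vec: "v \<in> carrier_vec m \<Longrightarrow> 0\<^sub>m n m *\<^sub>v v = 0\<^sub>v n"
  by (intro eq_vecI) (auto simp: scalar_prod_def)

lemma decomp_eigen:
  assumes P: "psd_mat n P" and N: "psd_mat n N" and MPN: "M = P - N" and PN: "P * N = 0\<^sub>m n n"
    and u: "u \<in> carrier_vec n" and e: "M *\<^sub>v u = complex_of_real r \<cdot>\<^sub>v u"
  shows "P *\<^sub>v u = complex_of_real (max r 0) \<cdot>\<^sub>v u"
proof -
  have Pc: "P \<in> carrier_mat n n" and Nc: "N \<in> carrier_mat n n" using P N psd_carrier by auto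
  have hP: "herm_mat n P" and hN: "herm_mat n N" using P N psd_herm by auto
  have Pu: "P *\<^sub>v u \<in> carrier_vec n" and Nu: "N *\<^sub>v u \<in> carrier_vec n" using Pc Nc u by auto
  have Mu: "M *\<^sub>v u = P *\<^sub>v u - N *\<^sub>v u" unfolding MPN by (rule minus_mult_distrib_mat_vec[OF Pc Nc u])
  have Pu_eq: "P *\<^sub>v u = complex_of_real r \<cdot>\<^sub>v u + N *\<^sub>v u"
  proof (rule eq_vecI)
    fix i assume i: "i < dim_vec (complex_of_real r \<cdot>\<^sub>v u + N *\<^sub>v u)"
    then have i': "i < n" using Nc by simp
    have "(M *\<^sub>v u) $ i = (P *\<^sub>v u) $ i - (N *\<^sub>v u) $ i" unfolding Mu using i' Pc Nc by simp
    then show "(P *\<^sub>v u) $ i = (complex_of_real r \<cdot>\<^sub>v u + N *\<^sub>v u) $ i"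
      unfolding e using i' u Nc by simp
  qed (use Pc Nc in simp)
  have PNv: "P *\<^sub>v (N *\<^sub>v v) = 0\<^sub>v n" if v: "v \<in> carrier_vec n" for v
    using assoc_mult_mat_vec[OF Pc Nc v, symmetric] PN zero_mult_vec[OF v] by simp
  have NPu: "N *\<^sub>v (P *\<^sub>v u) = 0\<^sub>v n"
  proof -
    define x where "x = N *\<^sub>v (P *\<^sub>v u)"
    have x: "x \<in> carrier_vec n" unfolding x_def using Nc Pu by simp
    have "ip x x = ip (N *\<^sub>v x) (P *\<^sub>v u)" unfolding x_def using herm_ip[OF hN _ Pu, of x] x x_def by simp
    also have "\<dots> = ip (P *\<^sub>v (N *\<^sub>v x)) u" using herm_ip[OF hP _ u, of "N *\<^sub>v x"] Nc x by simp
    also have "\<dots> = 0" using PNv[OF x] ip_zero_left by simp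
    finally have "ip x x = 0" .
    then have "x = 0\<^sub>v (dim_vec x)" by (rule ip_self_zero)
    then show ?thesis using x Nc unfolding x_def by simp
  qed
  have PPu: "P *\<^sub>v (P *\<^sub>v u) = complex_of_real r \<cdot>\<^sub>v (P *\<^sub>v u)"
  proof -
    have "P *\<^sub>v (P *\<^sub>v u) = P *\<^sub>v (complex_of_real r \<cdot>\<^sub>v u + N *\<^sub>v u)"
      by (simp only: Pu_eq[symmetric])
    also have "\<dots> = P *\<^sub>v (complex_of_real r \<cdot>\<^sub>v u) + P *\<^sub>v (N *\<^sub>v u)"
      by (rule mult_add_distrib_mat_vec[OF Pc]) (use u Nu in auto)
    also have "\<dots> = complex_of_real r \<cdot>\<^sub>v (P *\<^sub>v u)"
      using PNv[OF u] mult_mat_vec[OF Pc u] Pu by simp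
    finally show ?thesis .
  qed
  have Nu_eq: "N *\<^sub>v u = P *\<^sub>v u - complex_of_real r \<cdot>\<^sub>v u"
  proof (rule eq_vecI)
    fix i assume i: "i < dim_vec (P *\<^sub>v u - complex_of_real r \<cdot>\<^sub>v u)"
    then have i': "i < n" using u by simp
    have "(P *\<^sub>v u) $ i = (complex_of_real r \<cdot>\<^sub>v u + N *\<^sub>v u) $ i" using Pu_eq by simp
    then show "(N *\<^sub>v u) $ i = (P *\<^sub>v u - complex_of_real r \<cdot>\<^sub>v u) $ i" using i' u Nc Pc by simp
  qed (use Pc Nc u in simp)
  have NNu: "N *\<^sub>v (N *\<^sub>v u) = (- complex_of_real r) \<cdot>\<^sub>v (N *\<^sub>v u)"
  proof -
    have "N *\<^sub>v (N *\<^sub>v u) = N *\<^sub>v (P *\<^sub>v u - complex_of_real r \<cdot>\<^sub>v u)"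
      by (simp only: Nu_eq[symmetric])
    also have "\<dots> = N *\<^sub>v (P *\<^sub>v u) - N *\<^sub>v (complex_of_real r \<cdot>\<^sub>v u)"
      by (rule mult_minus_distrib_mat_vec[OF Nc]) (use u Pu in auto)
    also have "\<dots> = (- complex_of_real r) \<cdot>\<^sub>v (N *\<^sub>v u)"
      unfolding NPu mult_mat_vec[OF Nc u] using Nu by (intro eq_vecI) auto
    finally show ?thesis .
  qed
  have qP: "Re (ip (P *\<^sub>v u) (P *\<^sub>v u)) = r * Re (ip u (P *\<^sub>v u))"
  proof -
    have "ip (P *\<^sub>v u) (P *\<^sub>v u) = ip u (P *\<^sub>v (P *\<^sub>v u))" by (rule herm_ip[OF hP u Pu])
    also have "\<dots> = complex_of_real r * ip u (P *\<^sub>v u)" unfolding PPu by (rule ip_smult_right) (use Pc u in simp)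
    finally show ?thesis by simp
  qed
  have qN: "Re (ip (N *\<^sub>v u) (N *\<^sub>v u)) = - r * Re (ip u (N *\<^sub>v u))"
  proof -
    have "ip (N *\<^sub>v u) (N *\<^sub>v u) = ip u (N *\<^sub>v (N *\<^sub>v u))" by (rule herm_ip[OF hN u Nu])
    also have "\<dots> = (- complex_of_real r) * ip u (N *\<^sub>v u)" unfolding NNu by (rule ip_smult_right) (use Nc u in simp)
    finally show ?thesis by simp
  qed
  have gP: "0 \<le> Re (ip u (P *\<^sub>v u))" and gN: "0 \<le> Re (ip u (N *\<^sub>v u))" using psd_quad P N u by auto
  show ?thesis
  proof (cases "r > 0")
    case True
    then have "Re (ip (N *\<^sub>v u) (N *\<^sub>v u)) \<le> 0" using qN gN by (simp add: mult_nonneg_nonneg)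
    then have "N *\<^sub>v u = 0\<^sub>v n" using ip_le0_zero[of "N *\<^sub>v u"] Nc by simp
    then show ?thesis using Pu_eq True u by (intro eq_vecI) auto
  next
    case False
    then have "Re (ip (P *\<^sub>v u) (P *\<^sub>v u)) \<le> 0" using qP gP by (simp add: mult_nonpos_nonneg)
    then have "P *\<^sub>v u = 0\<^sub>v n" using ip_le0_zero[of "P *\<^sub>v u"] Pc by simp
    then show ?thesis using False u by (intro eq_vecI) auto
  qed
qed


definition decomp :: "nat \<Rightarrow> complex mat \<Rightarrow> complex mat \<Rightarrow> complex mat \<Rightarrow> bool" where
  "decomp n M P N \<longleftrightarrow> psd_mat n P \<and> psd_mat n N \<and> M = P - N \<and> P * N = 0\<^sub>m n n"

lemma decomp_N_eigen:
  assumes d: "decomp n M P N" and u: "u \<in> carrier_vec n" and e: "M *\<^sub>v u = complex_of_real r \<cdot>\<^sub>v u"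
  shows "N *\<^sub>v u = complex_of_real (max (- r) 0) \<cdot>\<^sub>v u"
proof -
  have P: "psd_mat n P" and N: "psd_mat n N" and MPN: "M = P - N" and PN: "P * N = 0\<^sub>m n n"
    using d unfolding decomp_def by auto
  have Pc: "P \<in> carrier_mat n n" and Nc: "N \<in> carrier_mat n n" using P N psd_carrier by auto
  have Pu: "P *\<^sub>v u = complex_of_real (max r 0) \<cdot>\<^sub>v u" by (rule decomp_eigen[OF P N MPN PN u e])
  have Mu: "M *\<^sub>v u = P *\<^sub>v u - N *\<^sub>v u" unfolding MPN by (rule minus_mult_distrib_mat_vec[OF Pc Nc u])
  show ?thesis
  proof (rule eq_vecI)
    fix i assume i: "i < dim_vec (complex_of_real (max (- r) 0) \<cdot>\<^sub>v u)"
    then have i': "i < n" using u by simp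
    have "(M *\<^sub>v u) $ i = (P *\<^sub>v u) $ i - (N *\<^sub>v u) $ i" unfolding Mu using i' Pc Nc by simp
    then have "(N *\<^sub>v u) $ i = complex_of_real (max r 0) * u $ i - complex_of_real r * u $ i"
      unfolding e Pu using i' u by simp
    also have "\<dots> = complex_of_real (max (- r) 0) * u $ i"
      by (cases "r \<ge> 0") (auto simp: algebra_simps max_def)
    finally show "(N *\<^sub>v u) $ i = (complex_of_real (max (- r) 0) \<cdot>\<^sub>v u) $ i" using i' u by simp
  qed (use Nc u in simp)
qed

lemma decomp_unique:
  assumes M: "herm_mat n M" and n: "n \<ge> 1" and d1: "decomp n M P N" and d2: "decomp n M P' N'"
  shows "P = P' \<and> N = N'"
proof -
  have c: "P \<in> carrier_mat n n" "N \<in> carrier_mat n n" "P' \<in> carrier_mat n n" "N' \<in> carrier_mat n n"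
    using d1 d2 psd_carrier unfolding decomp_def by auto
  have r: "M *\<^sub>v u = complex_of_real (Re e) \<cdot>\<^sub>v u" if "e \<in> spec M" "M *\<^sub>v u = e \<cdot>\<^sub>v u" for e u
    using that spec_of_real[OF M that(1)] by simp
  have "P = P'"
  proof (rule eq_on_eigvecs[OF M n c(1) c(3)])
    fix e u assume e: "e \<in> spec M" and u: "u \<in> carrier_vec n" and Mu: "M *\<^sub>v u = e \<cdot>\<^sub>v u"
    have 1: "psd_mat n P" "psd_mat n N" "M = P - N" "P * N = 0\<^sub>m n n" using d1 unfolding decomp_def by auto
    have 2: "psd_mat n P'" "psd_mat n N'" "M = P' - N'" "P' * N' = 0\<^sub>m n n" using d2 unfolding decomp_def by auto
    show "P *\<^sub>v u = P' *\<^sub>v u"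
      using decomp_eigen[OF 1 u r[OF e Mu]] decomp_eigen[OF 2 u r[OF e Mu]] by simp
  qed
  moreover have "N = N'"
  proof (rule eq_on_eigvecs[OF M n c(2) c(4)])
    fix e u assume e: "e \<in> spec M" and u: "u \<in> carrier_vec n" and Mu: "M *\<^sub>v u = e \<cdot>\<^sub>v u"
    show "N *\<^sub>v u = N' *\<^sub>v u"
      using decomp_N_eigen[OF d1 u r[OF e Mu]] decomp_N_eigen[OF d2 u r[OF e Mu]] by simp
  qed
  ultimately show ?thesis by simp
qed

definition posf :: "complex mat \<Rightarrow> complex poly" where
  "posf M = interp (spec M) (\<lambda>e. complex_of_real (max (Re e) 0))"
definition negf :: "complex mat \<Rightarrow> complex poly" where
  "negf M = interp (spec M) (\<lambda>e. complex_of_real (max (- Re e) 0))"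

lemma poly_posf: assumes M: "herm_mat n M" and e: "e \<in> spec M"
  shows "poly (posf M) e = complex_of_real (max (Re e) 0)"
  unfolding posf_def by (rule poly_interp[OF spec_finite[OF herm_carrier[OF M]] e])
lemma poly_negf: assumes M: "herm_mat n M" and e: "e \<in> spec M"
  shows "poly (negf M) e = complex_of_real (max (- Re e) 0)"
  unfolding negf_def by (rule poly_interp[OF spec_finite[OF herm_carrier[OF M]] e])
lemma realp_posf: "herm_mat n M \<Longrightarrow> realp (posf M)"
  unfolding posf_def using spec_real by (intro realp_interp) auto
lemma realp_negf: "herm_mat n M \<Longrightarrow> realp (negf M)"
  unfolding negf_def using spec_real by (intro realp_interp) auto

lemma decomp_exists:
  assumes M: "herm_mat n M" and n: "n \<ge> 1"
  shows "decomp n M (evalM M (posf M)) (evalM M (negf M))"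
  unfolding decomp_def
proof (intro conjI)
  have Mc: "M \<in> carrier_mat n n" using herm_carrier[OF M] .
  show "psd_mat n (evalM M (posf M))"
    by (rule evalM_psd[OF M n]) (simp add: poly_posf[OF M])
  show "psd_mat n (evalM M (negf M))"
    by (rule evalM_psd[OF M n]) (simp add: poly_negf[OF M])
  have "evalM M [:0,1:] = evalM M (posf M - negf M)"
  proof (rule evalM_eq_on_spec[OF M n], intro ballI)
    fix e assume e: "e \<in> spec M"
    have "poly (posf M - negf M) e = complex_of_real (max (Re e) 0 - max (- Re e) 0)"
      by (simp add: poly_posf[OF M e] poly_negf[OF M e])
    also have "max (Re e) 0 - max (- Re e) 0 = Re e" by (simp add: max_def)
    finally show "poly [:0, 1:] e = poly (posf M - negf M) e" using spec_of_real[OF M e] by simp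
  qed
  then show "M = evalM M (posf M) - evalM M (negf M)" by (simp add: evalM_X[OF Mc] evalM_minus[OF Mc])
  have "evalM M (posf M * negf M) = 0\<^sub>m n n"
  proof (rule evalM_vanish[OF M n], intro ballI)
    fix e assume e: "e \<in> spec M"
    have "max (Re e) 0 * max (- Re e) 0 = 0" by (simp add: max_def)
    then show "poly (posf M * negf M) e = 0"
      by (simp add: poly_posf[OF M e] poly_negf[OF M e] of_real_mult[symmetric] del: of_real_mult)
  qed
  then show "evalM M (posf M) * evalM M (negf M) = 0\<^sub>m n n" by (simp add: evalM_mult[OF Mc])
qed

lemma jordan_parts_herm:
  assumes M: "herm_mat n M" and n: "n \<ge> 1"
  shows "pos_part M = evalM M (posf M)" "neg_part M = evalM M (negf M)"
proof -
  have dr: "dim_row M = n" using herm_carrier[OF M] by simp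
  have "jordan_parts M = (evalM M (posf M), evalM M (negf M))"
    unfolding jordan_parts_def dr
  proof (rule the_equality)
    show "case (evalM M (posf M), evalM M (negf M)) of (P, N) \<Rightarrow>
      psd_mat n P \<and> psd_mat n N \<and> M = P - N \<and> P * N = 0\<^sub>m n n"
      using decomp_exists[OF M n] unfolding decomp_def by simp
    fix x assume x: "case x of (P, N) \<Rightarrow> psd_mat n P \<and> psd_mat n N \<and> M = P - N \<and> P * N = 0\<^sub>m n n"
    obtain P N where xPN: "x = (P, N)" by (cases x)
    have "decomp n M P N" using x unfolding xPN decomp_def by simp
    then show "x = (evalM M (posf M), evalM M (negf M))"
      using decomp_unique[OF M n _ decomp_exists[OF M n]] xPN by simp
  qed
  then show "pos_part M = evalM M (posf M)" "neg_part M = evalM M (negf M)"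
    unfolding pos_part_def neg_part_def by simp_all
qed


lemma vnorm_eq: "vnorm x = sqrt (Re (ip x x))"
  unfolding vnorm_def ip_self Re_complex_of_real by (rule refl)

lemma vnorm_nonneg: "0 \<le> vnorm x" unfolding vnorm_def by (rule real_sqrt_ge_zero, rule sum_nonneg) simp

lemma vnorm_smult: "vnorm (c \<cdot>\<^sub>v x) = cmod c * vnorm x"
proof -
  have "ip (c \<cdot>\<^sub>v x) (c \<cdot>\<^sub>v x) = cnj c * (c * ip x x)"
    by (simp add: ip_smult_left ip_smult_right)
  also have "\<dots> = complex_of_real ((cmod c)\<^sup>2) * ip x x"
  proof -
    have cc: "cnj c * c = complex_of_real ((cmod c)\<^sup>2)" by (metis complex_norm_square mult.commute)
    show ?thesis by (simp only: mult.assoc[symmetric] cc)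
  qed
  finally have "Re (ip (c \<cdot>\<^sub>v x) (c \<cdot>\<^sub>v x)) = (cmod c)\<^sup>2 * Re (ip x x)" by simp
  then show ?thesis unfolding vnorm_eq by (simp add: real_sqrt_mult)
qed

lemma vnorm_pos: assumes "x \<noteq> 0\<^sub>v (dim_vec x)" shows "0 < vnorm x"
proof -
  have "\<not> Re (ip x x) \<le> 0" using ip_le0_zero assms by blast
  then show ?thesis unfolding vnorm_eq by simp
qed

lemma op_norm_evalM:
  assumes M: "herm_mat n M" and n: "n \<ge> 1" and t: "t \<ge> 0" and rf: "realp f"
    and bnd: "\<And>e. e \<in> spec M \<Longrightarrow> \<exists>r. poly f e = complex_of_real r \<and> 0 \<le> r \<and> r \<le> t"
    and e0: "e0 \<in> spec M" and pe0: "poly f e0 = complex_of_real t"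
  shows "op_norm (evalM M f) = t"
proof -
  have Mc: "M \<in> carrier_mat n n" using herm_carrier[OF M] .
  define F where "F = evalM M f"
  have Fc: "F \<in> carrier_mat n n" unfolding F_def using Mc by simp
  have hF: "herm_mat n F" unfolding F_def by (rule evalM_herm[OF M rf])
  define g where "g = [: complex_of_real (t * t) :] - f * f"
  have psdg: "psd_mat n (evalM M g)"
  proof (rule evalM_psd[OF M n])
    fix e assume e: "e \<in> spec M"
    obtain r where r: "poly f e = complex_of_real r" "0 \<le> r" "r \<le> t" using bnd[OF e] by blast
    have "poly g e = complex_of_real (t * t - r * r)" unfolding g_def using r(1) by simp
    moreover have "r * r \<le> t * t" using r(2,3) by (simp add: mult_mono)
    ultimately show "poly g e \<in> \<real> \<and> 0 \<le> Re (poly g e)" by simp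
  qed
  have egv: "evalM M g = complex_of_real (t * t) \<cdot>\<^sub>m 1\<^sub>m n - F * F"
    unfolding g_def F_def by (simp add: evalM_minus[OF Mc] evalM_const[OF Mc] evalM_mult[OF Mc])
  have bound: "vnorm (F *\<^sub>v v) \<le> t * vnorm v" if v: "v \<in> carrier_vec n" for v
  proof -
    have Fv: "F *\<^sub>v v \<in> carrier_vec n" using Fc v by simp
    have "evalM M g *\<^sub>v v = complex_of_real (t * t) \<cdot>\<^sub>v v - F *\<^sub>v (F *\<^sub>v v)"
    proof -
      have "evalM M g *\<^sub>v v = (complex_of_real (t * t) \<cdot>\<^sub>m 1\<^sub>m n) *\<^sub>v v - (F * F) *\<^sub>v v"
        unfolding egv by (rule minus_mult_distrib_mat_vec) (use Fc v in auto)
      also have "(complex_of_real (t * t) \<cdot>\<^sub>m 1\<^sub>m n) *\<^sub>v v = complex_of_real (t * t) \<cdot>\<^sub>v v"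
        using smult_mat_mult_vec[OF one_carrier_mat v] v by simp
      also have "(F * F) *\<^sub>v v = F *\<^sub>v (F *\<^sub>v v)" by (rule assoc_mult_mat_vec[OF Fc Fc v])
      finally show ?thesis .
    qed
    then have "ip v (evalM M g *\<^sub>v v) = complex_of_real (t * t) * ip v v - ip v (F *\<^sub>v (F *\<^sub>v v))"
      using v Fc by (simp add: ip_minus_right ip_smult_right)
    also have "ip v (F *\<^sub>v (F *\<^sub>v v)) = ip (F *\<^sub>v v) (F *\<^sub>v v)" using herm_ip[OF hF v Fv] by simp
    finally have "Re (ip v (evalM M g *\<^sub>v v)) = t * t * (vnorm v)\<^sup>2 - (vnorm (F *\<^sub>v v))\<^sup>2"
      by (simp add: ip_Re_vnorm)
    moreover have "0 \<le> Re (ip v (evalM M g *\<^sub>v v))" by (rule psd_quad[OF psdg v])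
    ultimately have le: "(vnorm (F *\<^sub>v v))\<^sup>2 \<le> t * t * (vnorm v)\<^sup>2" by linarith
    have eq: "(t * vnorm v)\<^sup>2 = t * t * (vnorm v)\<^sup>2" by (simp add: power2_eq_square mult_ac)
    have "(vnorm (F *\<^sub>v v))\<^sup>2 \<le> (t * vnorm v)\<^sup>2" unfolding eq by (rule le)
    then show ?thesis by (rule power2_le_imp_le) (use t vnorm_nonneg[of v] in simp)
  qed
  obtain x where x: "x \<in> carrier_vec n" "x \<noteq> 0\<^sub>v n" "M *\<^sub>v x = e0 \<cdot>\<^sub>v x"
    using spec_eigvec[OF Mc e0] by blast
  have xpos: "0 < vnorm x" using vnorm_pos[of x] x by simp
  define u where "u = complex_of_real (1 / vnorm x) \<cdot>\<^sub>v x"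
  have u: "u \<in> carrier_vec n" unfolding u_def using x by simp
  have nu: "vnorm u = 1" unfolding u_def vnorm_smult using xpos by (simp add: norm_divide)
  have "M *\<^sub>v u = complex_of_real (1 / vnorm x) \<cdot>\<^sub>v (e0 \<cdot>\<^sub>v x)"
    unfolding u_def mult_mat_vec[OF Mc x(1)] x(3) ..
  also have "\<dots> = e0 \<cdot>\<^sub>v u" unfolding u_def by (simp add: smult_smult_assoc mult.commute)
  finally have Mu: "M *\<^sub>v u = e0 \<cdot>\<^sub>v u" .
  have Fu: "F *\<^sub>v u = complex_of_real t \<cdot>\<^sub>v u" unfolding F_def using evalM_eigen[OF Mc u Mu] pe0 by simp
  have nFu: "vnorm (F *\<^sub>v u) = t" unfolding Fu vnorm_smult nu using t by simp
  have "op_norm F = Sup {vnorm (F *\<^sub>v v) | v. v \<in> carrier_vec n \<and> vnorm v \<le> 1}"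
    unfolding op_norm_def using Fc by simp
  also have "\<dots> = t"
  proof (rule cSup_eq_maximum)
    have "t = vnorm (F *\<^sub>v u) \<and> u \<in> carrier_vec n \<and> vnorm u \<le> 1" using u nu nFu by simp
    then show "t \<in> {vnorm (F *\<^sub>v v) | v. v \<in> carrier_vec n \<and> vnorm v \<le> 1}" by blast
    fix y assume "y \<in> {vnorm (F *\<^sub>v v) | v. v \<in> carrier_vec n \<and> vnorm v \<le> 1}"
    then obtain v where v: "v \<in> carrier_vec n" "vnorm v \<le> 1" "y = vnorm (F *\<^sub>v v)" by blast
    have "y \<le> t * vnorm v" using bound[OF v(1)] v(3) by simp
    also have "\<dots> \<le> t" using v(2) t by (simp add: mult_left_le)
    finally show "y \<le> t" .
  qed
  finally show ?thesis unfolding F_def .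
qed


lemma psd_zero_dim: assumes "herm_mat 0 M" shows "psd_mat 0 M"
  unfolding psd_mat_def
proof (intro conjI ballI)
  show "herm_mat 0 M" by fact
  fix v :: "complex vec" assume "v \<in> carrier_vec 0"
  then have "dim_vec v = 0" by simp
  then show "0 \<le> Re (quad_form M v)" unfolding quad_form_def by simp
qed

lemma evalM_negX: assumes M: "M \<in> carrier_mat n n" shows "evalM M [:0, -1:] = - M"
proof -
  have "[:0, -1:] = smult (-1) [:0, 1::complex:]" by simp
  then have "evalM M [:0, -1:] = (-1) \<cdot>\<^sub>m M" by (simp only: evalM_smult[OF M] evalM_X[OF M])
  also have "\<dots> = - M" using M by (intro eq_matI) auto
  finally show ?thesis .
qed

lemma nondef:
  assumes M: "herm_mat n M" and np: "\<not> psd_mat n M" and nn: "\<not> psd_mat n (- M)"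
  shows "n \<ge> 1" "\<exists>e\<in>spec M. Re e < 0" "\<exists>e\<in>spec M. Re e > 0"
proof -
  have Mc: "M \<in> carrier_mat n n" using herm_carrier[OF M] .
  show n: "n \<ge> 1"
  proof (rule ccontr)
    assume "\<not> n \<ge> 1"
    then have "n = 0" by simp
    then show False using np psd_zero_dim M by simp
  qed
  show "\<exists>e\<in>spec M. Re e < 0"
  proof (rule ccontr)
    assume "\<not> (\<exists>e\<in>spec M. Re e < 0)"
    then have h: "\<And>e. e \<in> spec M \<Longrightarrow> 0 \<le> Re e" by force
    have "psd_mat n (evalM M [:0,1:])"
      by (rule evalM_psd[OF M n]) (use h spec_real[OF M] in simp)
    then show False using np evalM_X[OF Mc] by simp
  qed
  show "\<exists>e\<in>spec M. Re e > 0"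
  proof (rule ccontr)
    assume "\<not> (\<exists>e\<in>spec M. Re e > 0)"
    then have h: "\<And>e. e \<in> spec M \<Longrightarrow> Re e \<le> 0" by force
    have "psd_mat n (evalM M [:0,-1:])"
      by (rule evalM_psd[OF M n]) (use h spec_real[OF M] in simp)
    then show False using nn evalM_negX[OF Mc] by simp
  qed
qed

lemma unit_eigvec:
  assumes M: "herm_mat n M" and e0: "e0 \<in> spec M"
  shows "\<exists>u. u \<in> carrier_vec n \<and> vnorm u = 1 \<and> M *\<^sub>v u = e0 \<cdot>\<^sub>v u"
proof -
  have Mc: "M \<in> carrier_mat n n" using herm_carrier[OF M] .
  obtain x where x: "x \<in> carrier_vec n" "x \<noteq> 0\<^sub>v n" "M *\<^sub>v x = e0 \<cdot>\<^sub>v x"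
    using spec_eigvec[OF Mc e0] by blast
  have xpos: "0 < vnorm x" using vnorm_pos[of x] x by simp
  define u where "u = complex_of_real (1 / vnorm x) \<cdot>\<^sub>v x"
  have u: "u \<in> carrier_vec n" unfolding u_def using x by simp
  have nu: "vnorm u = 1" unfolding u_def vnorm_smult using xpos by (simp add: norm_divide)
  have "M *\<^sub>v u = complex_of_real (1 / vnorm x) \<cdot>\<^sub>v (e0 \<cdot>\<^sub>v x)"
    unfolding u_def mult_mat_vec[OF Mc x(1)] x(3) ..
  also have "\<dots> = e0 \<cdot>\<^sub>v u" unfolding u_def by (simp add: smult_smult_assoc mult.commute)
  finally show ?thesis using u nu by blast
qed

definition lmax :: "complex mat \<Rightarrow> real" where "lmax M = Max (Re ` spec M)"
definition lmin :: "complex mat \<Rightarrow> real" where "lmin M = Min (Re ` spec M)"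

lemma spectral_data:
  assumes M: "herm_mat n M" and np: "\<not> psd_mat n M" and nn: "\<not> psd_mat n (- M)"
  shows "n \<ge> 1" "lmax M > 0" "lmin M < 0"
    "\<And>e. e \<in> spec M \<Longrightarrow> lmin M \<le> Re e \<and> Re e \<le> lmax M"
    "\<exists>u. u \<in> carrier_vec n \<and> vnorm u = 1 \<and> M *\<^sub>v u = complex_of_real (lmax M) \<cdot>\<^sub>v u"
    "\<exists>u. u \<in> carrier_vec n \<and> vnorm u = 1 \<and> M *\<^sub>v u = complex_of_real (lmin M) \<cdot>\<^sub>v u"
    "op_norm (pos_part M) = lmax M" "op_norm (neg_part M) = - lmin M"
proof -
  have Mc: "M \<in> carrier_mat n n" using herm_carrier[OF M] .
  show n: "n \<ge> 1" by (rule nondef(1)[OF M np nn])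
  have fin: "finite (Re ` spec M)" using spec_finite[OF Mc] by simp
  obtain en where en: "en \<in> spec M" "Re en < 0" using nondef(2)[OF M np nn] by blast
  obtain ep where ep: "ep \<in> spec M" "Re ep > 0" using nondef(3)[OF M np nn] by blast
  have ne: "Re ` spec M \<noteq> {}" using en by blast
  have maxin: "lmax M \<in> Re ` spec M" unfolding lmax_def by (rule Max_in[OF fin ne])
  have minin: "lmin M \<in> Re ` spec M" unfolding lmin_def by (rule Min_in[OF fin ne])
  show bnds: "lmin M \<le> Re e \<and> Re e \<le> lmax M" if "e \<in> spec M" for e
    unfolding lmax_def lmin_def using that fin by auto
  show lp: "lmax M > 0" using bnds[OF ep(1)] ep(2) by linarith
  show lm: "lmin M < 0" using bnds[OF en(1)] en(2) by linarith
  obtain e1 where e1: "e1 \<in> spec M" "Re e1 = lmax M" using maxin by auto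
  obtain e2 where e2: "e2 \<in> spec M" "Re e2 = lmin M" using minin by auto
  have e1r: "e1 = complex_of_real (lmax M)" using spec_of_real[OF M e1(1)] e1(2) by simp
  have e2r: "e2 = complex_of_real (lmin M)" using spec_of_real[OF M e2(1)] e2(2) by simp
  show "\<exists>u. u \<in> carrier_vec n \<and> vnorm u = 1 \<and> M *\<^sub>v u = complex_of_real (lmax M) \<cdot>\<^sub>v u"
    using unit_eigvec[OF M e1(1)] e1r by simp
  show "\<exists>u. u \<in> carrier_vec n \<and> vnorm u = 1 \<and> M *\<^sub>v u = complex_of_real (lmin M) \<cdot>\<^sub>v u"
    using unit_eigvec[OF M e2(1)] e2r by simp
  have "op_norm (evalM M (posf M)) = lmax M"
  proof (rule op_norm_evalM[OF M n _ realp_posf[OF M] _ e1(1)])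
    show "0 \<le> lmax M" using lp by simp
    fix e assume e: "e \<in> spec M"
    show "\<exists>r. poly (posf M) e = complex_of_real r \<and> 0 \<le> r \<and> r \<le> lmax M"
      using poly_posf[OF M e] bnds[OF e] lp by auto
  next
    show "poly (posf M) e1 = complex_of_real (lmax M)" using poly_posf[OF M e1(1)] e1(2) lp by simp
  qed
  then show "op_norm (pos_part M) = lmax M" using jordan_parts_herm[OF M n] by simp
  have "op_norm (evalM M (negf M)) = - lmin M"
  proof (rule op_norm_evalM[OF M n _ realp_negf[OF M] _ e2(1)])
    show "0 \<le> - lmin M" using lm by simp
    fix e assume e: "e \<in> spec M"
    show "\<exists>r. poly (negf M) e = complex_of_real r \<and> 0 \<le> r \<and> r \<le> - lmin M"
      using poly_negf[OF M e] bnds[OF e] lm by auto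
  next
    show "poly (negf M) e2 = complex_of_real (- lmin M)" using poly_negf[OF M e2(1)] e2(2) lm by simp
  qed
  then show "op_norm (neg_part M) = - lmin M" using jordan_parts_herm[OF M n] by simp
qed


lemma quad_form_lin:
  assumes X: "X \<in> carrier_mat n n" and Y: "Y \<in> carrier_mat n n" and u: "u \<in> carrier_vec n"
  shows "quad_form (c \<cdot>\<^sub>m X + d \<cdot>\<^sub>m Y) u = c * quad_form X u + d * quad_form Y u"
proof -
  have "quad_form (c \<cdot>\<^sub>m X + d \<cdot>\<^sub>m Y) u =
    (\<Sum>i<n. \<Sum>j<n. c * (cnj (u $ i) * X $$ (i,j) * u $ j) + d * (cnj (u $ i) * Y $$ (i,j) * u $ j))"
    unfolding quad_form_def
  proof (rule sum.cong)
    fix i assume i: "i \<in> {..<n}"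
    show "(\<Sum>j<dim_vec u. cnj (u $ i) * (c \<cdot>\<^sub>m X + d \<cdot>\<^sub>m Y) $$ (i, j) * u $ j) =
      (\<Sum>j<n. c * (cnj (u $ i) * X $$ (i,j) * u $ j) + d * (cnj (u $ i) * Y $$ (i,j) * u $ j))"
    proof (rule sum.cong)
      fix j assume j: "j \<in> {..<n}"
      show "cnj (u $ i) * (c \<cdot>\<^sub>m X + d \<cdot>\<^sub>m Y) $$ (i, j) * u $ j =
        c * (cnj (u $ i) * X $$ (i,j) * u $ j) + d * (cnj (u $ i) * Y $$ (i,j) * u $ j)"
        using i j X Y by (simp add: algebra_simps)
    qed (use u in simp)
  qed (use u in simp)
  also have "\<dots> = c * quad_form X u + d * quad_form Y u"
    unfolding quad_form_def using u by (simp add: sum.distrib sum_distrib_left)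
  finally show ?thesis .
qed

lemma psd_comb:
  assumes C: "psd_mat k C" and D: "psd_mat k D" and a: "0 \<le> \<alpha>" and b: "0 \<le> \<beta>"
  shows "psd_mat k (complex_of_real \<alpha> \<cdot>\<^sub>m C + complex_of_real \<beta> \<cdot>\<^sub>m D)"
  unfolding psd_mat_def
proof (intro conjI ballI)
  show "herm_mat k (complex_of_real \<alpha> \<cdot>\<^sub>m C + complex_of_real \<beta> \<cdot>\<^sub>m D)"
    by (rule herm_lincomb[OF psd_herm[OF C] psd_herm[OF D]]) auto
  fix v :: "complex vec" assume v: "v \<in> carrier_vec k"
  have "Re (quad_form (complex_of_real \<alpha> \<cdot>\<^sub>m C + complex_of_real \<beta> \<cdot>\<^sub>m D) v) =
     \<alpha> * Re (quad_form C v) + \<beta> * Re (quad_form D v)"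
    using quad_form_lin[OF psd_carrier[OF C] psd_carrier[OF D] v] by simp
  moreover have "0 \<le> Re (quad_form C v)" "0 \<le> Re (quad_form D v)"
    using C D v unfolding psd_mat_def by blast+
  ultimately show "0 \<le> Re (quad_form (complex_of_real \<alpha> \<cdot>\<^sub>m C + complex_of_real \<beta> \<cdot>\<^sub>m D) v)"
    using a b by simp
qed

lemma quad_eig:
  assumes A: "A \<in> carrier_mat n n" and u: "u \<in> carrier_vec n" and nu: "vnorm u = 1"
    and e: "A *\<^sub>v u = complex_of_real r \<cdot>\<^sub>v u"
  shows "Re (quad_form A u) = r"
proof -
  have "quad_form A u = ip u (complex_of_real r \<cdot>\<^sub>v u)" using quad_form_ip[OF A u] e by simp
  also have "\<dots> = complex_of_real r * ip u u" by (rule ip_smult_right) (use u in simp)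
  also have "ip u u = 1" using ip_self_vnorm[of u] nu by simp
  finally show ?thesis by simp
qed

lemma transfer:
  assumes A: "herm_mat n A" and B: "herm_mat k B" and k: "k \<ge> 1" and a: "a > 0" and b: "b > 0"
    and u: "u \<in> carrier_vec n" "vnorm u = 1" "A *\<^sub>v u = complex_of_real a \<cdot>\<^sub>v u"
    and w: "w \<in> carrier_vec n" "vnorm w = 1" "A *\<^sub>v w = complex_of_real (- b) \<cdot>\<^sub>v w"
    and sB: "\<And>e. e \<in> spec B \<Longrightarrow> - b \<le> Re e \<and> Re e \<le> a"
  shows "\<exists>\<Phi>. pu_map n k \<Phi> \<and> \<Phi> A = B"
proof -
  have Ac: "A \<in> carrier_mat n n" using herm_carrier[OF A] .
  have Bc: "B \<in> carrier_mat k k" using herm_carrier[OF B] .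
  define f where "f = smult (complex_of_real (1 / (a + b))) [:complex_of_real b, 1:]"
  have pf: "poly f e = complex_of_real ((Re e + b) / (a + b))" if e: "e \<in> spec B" for e
  proof -
    have h: "e = complex_of_real (Re e)" by (rule spec_of_real[OF B e])
    have "poly f (complex_of_real (Re e)) = complex_of_real ((Re e + b) / (a + b))"
      unfolding f_def by (simp add: add_divide_distrib add.commute)
    then show ?thesis using h by metis
  qed
  define C where "C = evalM B f"
  define D where "D = evalM B (1 - f)"
  have psdC: "psd_mat k C" unfolding C_def
  proof (rule evalM_psd[OF B k])
    fix e assume e: "e \<in> spec B"
    have "0 \<le> (Re e + b) / (a + b)" using sB[OF e] a b by simp
    then show "poly f e \<in> \<real> \<and> 0 \<le> Re (poly f e)" using pf[OF e] by simp
  qed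
  have psdD: "psd_mat k D" unfolding D_def
  proof (rule evalM_psd[OF B k])
    fix e assume e: "e \<in> spec B"
    have "(Re e + b) / (a + b) \<le> 1" using sB[OF e] a b by simp
    then show "poly (1 - f) e \<in> \<real> \<and> 0 \<le> Re (poly (1 - f) e)" using pf[OF e] by simp
  qed
  have Cc: "C \<in> carrier_mat k k" and Dc: "D \<in> carrier_mat k k" unfolding C_def D_def using Bc by auto
  define \<Phi> where "\<Phi> X = complex_of_real (Re (quad_form X u)) \<cdot>\<^sub>m C + complex_of_real (Re (quad_form X w)) \<cdot>\<^sub>m D" for X
  have comb: "complex_of_real x \<cdot>\<^sub>m C + complex_of_real y \<cdot>\<^sub>m D = evalM B (smult (complex_of_real x) f + smult (complex_of_real y) (1 - f))" for x y
    unfolding C_def D_def by (simp add: evalM_add[OF Bc] evalM_smult[OF Bc])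
  have "pu_map n k \<Phi>"
    unfolding pu_map_def
  proof (intro conjI allI impI)
    fix X assume X: "herm_mat n X"
    show "herm_mat k (\<Phi> X)" unfolding \<Phi>_def
      by (rule herm_lincomb[OF psd_herm[OF psdC] psd_herm[OF psdD]]) auto
  next
    fix X Y :: "complex mat" and \<alpha> \<beta> :: real
    assume XY: "herm_mat n X \<and> herm_mat n Y"
    have Xc: "X \<in> carrier_mat n n" and Yc: "Y \<in> carrier_mat n n" using XY herm_carrier by auto
    have qu: "Re (quad_form (complex_of_real \<alpha> \<cdot>\<^sub>m X + complex_of_real \<beta> \<cdot>\<^sub>m Y) u) =
       \<alpha> * Re (quad_form X u) + \<beta> * Re (quad_form Y u)"
      using quad_form_lin[OF Xc Yc u(1)] by simp
    have qw: "Re (quad_form (complex_of_real \<alpha> \<cdot>\<^sub>m X + complex_of_real \<beta> \<cdot>\<^sub>m Y) w) =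
       \<alpha> * Re (quad_form X w) + \<beta> * Re (quad_form Y w)"
      using quad_form_lin[OF Xc Yc w(1)] by simp
    show "\<Phi> (complex_of_real \<alpha> \<cdot>\<^sub>m X + complex_of_real \<beta> \<cdot>\<^sub>m Y) =
          complex_of_real \<alpha> \<cdot>\<^sub>m \<Phi> X + complex_of_real \<beta> \<cdot>\<^sub>m \<Phi> Y"
      unfolding \<Phi>_def qu qw using Cc Dc by (intro eq_matI) (auto simp: algebra_simps)
  next
    fix X assume X: "psd_mat n X"
    have "0 \<le> Re (quad_form X u)" "0 \<le> Re (quad_form X w)" using X u(1) w(1) unfolding psd_mat_def by blast+
    then show "psd_mat k (\<Phi> X)" unfolding \<Phi>_def by (rule psd_comb[OF psdC psdD])
  next
    have "Re (quad_form (1\<^sub>m n) u) = 1" by (rule quad_eig[of _ n _ 1]) (use u in simp_all)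
    moreover have "Re (quad_form (1\<^sub>m n) w) = 1" by (rule quad_eig[of _ n _ 1]) (use w in simp_all)
    ultimately have "\<Phi> (1\<^sub>m n) = evalM B (smult 1 f + smult 1 (1 - f))" unfolding \<Phi>_def comb by simp
    also have "smult 1 f + smult 1 (1 - f) = 1" by simp
    finally show "\<Phi> (1\<^sub>m n) = 1\<^sub>m k" using evalM_one[OF Bc] by simp
  qed
  moreover have "\<Phi> A = B"
  proof -
    have "Re (quad_form A u) = a" by (rule quad_eig[OF Ac u])
    moreover have "Re (quad_form A w) = - b" by (rule quad_eig[OF Ac w])
    ultimately have "\<Phi> A = evalM B (smult (complex_of_real a) f + smult (complex_of_real (- b)) (1 - f))"
      unfolding \<Phi>_def comb by simp
    also have "smult (complex_of_real a) f + smult (complex_of_real (- b)) (1 - f) = [:0, 1:]"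
    proof -
      have ab: "complex_of_real a + complex_of_real b \<noteq> 0"
      proof
        assume "complex_of_real a + complex_of_real b = 0"
        then have "complex_of_real (a + b) = 0" by (simp only: of_real_add)
        then have "a + b = 0" by (simp only: of_real_eq_0_iff)
        then show False using a b by linarith
      qed
      have "poly (smult (complex_of_real a) f + smult (complex_of_real (- b)) (1 - f)) = poly [:0, 1:]"
      proof
        fix x
        show "poly (smult (complex_of_real a) f + smult (complex_of_real (- b)) (1 - f)) x = poly [:0, 1:] x"
        proof -
          have 1: "poly (smult (complex_of_real a) f + smult (complex_of_real (- b)) (1 - f)) x =
            (complex_of_real a + complex_of_real b) * poly f x - complex_of_real b"
            by (simp add: algebra_simps)
          have 2: "(complex_of_real a + complex_of_real b) * poly f x = complex_of_real b + x"
            unfolding f_def using ab by (simp add: distrib_left)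
          show ?thesis unfolding 1 2 by simp
        qed
      qed
      then show ?thesis by (simp add: poly_eq_poly_eq_iff)
    qed
    finally show ?thesis using evalM_X[OF Bc] by simp
  qed
  ultimately show ?thesis by blast
qed

theorem mainTheorem9:
  fixes \<mu> :: "complex mat \<Rightarrow> real" and A B :: "complex mat" and n k :: nat
  assumes "pu_monotone \<mu>"
    and "herm_mat n A" and "herm_mat k B"
    and "\<not> psd_mat n A" and "\<not> psd_mat n (- A)"
    and "\<not> psd_mat k B" and "\<not> psd_mat k (- B)"
    and "op_norm (pos_part A) = op_norm (pos_part B)"
    and "op_norm (neg_part A) = op_norm (neg_part B)"
  shows "\<mu> A = \<mu> B"
proof -
  note mu = assms(1) and hA = assms(2) and hB = assms(3)
  note dA = spectral_data[OF assms(2,4,5)] and dB = spectral_data[OF assms(3,6,7)]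
  have eqmax: "lmax A = lmax B" using assms(8) dA(7) dB(7) by simp
  have eqmin: "lmin A = lmin B" using assms(9) dA(8) dB(8) by simp
  obtain uA where uA: "uA \<in> carrier_vec n" "vnorm uA = 1" "A *\<^sub>v uA = complex_of_real (lmax A) \<cdot>\<^sub>v uA"
    using dA(5) by blast
  obtain wA where wA: "wA \<in> carrier_vec n" "vnorm wA = 1" "A *\<^sub>v wA = complex_of_real (- (- lmin A)) \<cdot>\<^sub>v wA"
    using dA(6) by auto
  obtain uB where uB: "uB \<in> carrier_vec k" "vnorm uB = 1" "B *\<^sub>v uB = complex_of_real (lmax B) \<cdot>\<^sub>v uB"
    using dB(5) by blast
  obtain wB where wB: "wB \<in> carrier_vec k" "vnorm wB = 1" "B *\<^sub>v wB = complex_of_real (- (- lmin B)) \<cdot>\<^sub>v wB"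
    using dB(6) by auto
  obtain \<Phi> where \<Phi>: "pu_map n k \<Phi>" "\<Phi> A = B"
    using transfer[OF hA hB dB(1) dA(2) _ uA wA] dA(3) dB(4) eqmax eqmin by force
  obtain \<Psi> where \<Psi>: "pu_map k n \<Psi>" "\<Psi> B = A"
    using transfer[OF hB hA dA(1) dB(2) _ uB wB] dB(3) dA(4) eqmax eqmin by force
  have "\<mu> B \<le> \<mu> A" using mu \<Phi> hA dA(1) dB(1) unfolding pu_monotone_def by metis
  moreover have "\<mu> A \<le> \<mu> B" using mu \<Psi> hB dA(1) dB(1) unfolding pu_monotone_def by metis
  ultimately show ?thesis by simp
qed

end
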